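(* Under the setting, assumptions and notation in the context, assume in addition that the parameter $\tau$ equals $\theta/2$ and that $\Gamma\ge\hat\Gamma_3$. Then there exist scalars $M>0$ and $B_F>0$ such that, with $$\Theta:=\max\Big\{1,\ \sigma_{R}\hat\gamma L_0\|v\|_{R},\ c_0L_0\big(\hat\gamma\|R\|_2\|v\|_2L_0+\sqrt{m}\,\Lambda_0+\mu_f c_0B_F/M\big)\Big\}\cdot\frac{\sqrt3\,M}{\mu_f},\qquad \mathscr{B}:=\max\Big\{(\Gamma+1)^{1-a-b}\|\Delta_1\|_2,\ \frac{4\Theta}{\mu_f\lambda\hat\gamma\theta}\Big\},$$ the iterates of the algorithm satisfy: (i) for every $k\ge1$, $\|\mathbf{x}_{k+1}-\mathbf{1}\bar x_{k+1}\|_{R}\le \dfrac{\mathscr{B}}{(k+\Gamma-1)^{1-a-b}}$; (ii) for every $k\ge1$, $\|\mathbf{y}_{k+1}-v\bar y_{k+1}\|_{C}\le \dfrac{\mathscr{B}}{(k+\Gamma-1)^{1-a-b}}$; (iii) $\lim_{k\to\infty}\bar x_k=x^*$.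
   Context: Problem data. Let $m,n\ge1$, $[m]=\{1,\dots,m\}$. For $i\in[m]$ let $f_i:\mathbb{R}^n\to\mathbb{R}$ be continuously differentiable and $F_i:\mathbb{R}^n\to\mathbb{R}^n$. Put $f=\sum_i f_i$, $F=\sum_iF_i$. Assume: $f$ is $\mu_f$-strongly convex ($\mu_f>0$); each $\nabla f_i$ is $L_f$-Lipschitz; $F$ is monotone ($(F(x)-F(y))^\top(x-y)\ge0$); each $F_i$ is $L_F$-Lipschitz ($L_f,L_F>0$). Let $\mathrm{SOL}(\mathbb{R}^n,F)=\{x: F(x)^\top(y-x)\ge0\ \forall y\in\mathbb{R}^n\}$, assumed nonempty, and let $x^*$ be the unique minimizer of $f$ over $\mathrm{SOL}(\mathbb{R}^n,F)$. For $\lambda>0$, $x^*_\lambda$ denotes the unique $x$ with $F(x)+\lambda\nabla f(x)=0$. Points of $\mathbb{R}^n$ are row vectors; $\mathbf{1}\in\mathbb{R}^m$ is the all-ones column vector; $\|\cdot\|_2$ is the Euclidean norm (Frobenius for non-square matrices, spectral norm for $m\times m$ matrices). Communication matrices. $R,C\in\mathbb{R}^{m\times m}$ are nonnegative with strictly positive diagonals, $R\mathbf{1}=\mathbf{1}$, $\mathbf{1}^\top C=\mathbf{1}^\top$. For nonnegative $B$, $\mathcal{G}_B$ is the digraph on $[m]$ with edge $(j,i)$ iff $B_{ij}>0$, and $\mathcal{R}_B$ is the set of vertices that are roots of some spanning tree of $\mathcal{G}_B$; assume $\mathcal{R}_R\cap\mathcal{R}_{C^\top}\neq\emptyset$. Let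 $u\ge0$ be the unique vector with $u^\top R=u^\top$, $u^\top\mathbf{1}=m$, and $v\ge0$ the unique vector with $Cv=v$, $\mathbf{1}^\top v=m$. Algorithm (IR-Push-Pull). With stepsizes $\gamma_{i,k}\ge0$ and $\lambda_k>0$: $x_{i,0}\in\mathbb{R}^n$ arbitrary, $y_{i,0}=F_i(x_{i,0})+\lambda_0\nabla f_i(x_{i,0})$, and for $k\ge0$: $x_{i,k+1}=\sum_jR_{ij}(x_{j,k}-\gamma_{j,k}y_{j,k})$, $y_{i,k+1}=\sum_jC_{ij}y_{j,k}+F_i(x_{i,k+1})+\lambda_{k+1}\nabla f_i(x_{i,k+1})-F_i(x_{i,k})-\lambda_k\nabla f_i(x_{i,k})$. $\mathbf{x}_k,\mathbf{y}_k\in\mathbb{R}^{m\times n}$ have rows $x_{i,k},y_{i,k}$; $\boldsymbol\gamma_k=\mathrm{diag}(\gamma_{1,k},\dots,\gamma_{m,k})$; $\bar x_k=\frac1m u^\top\mathbf{x}_k$, $\bar y_k=\frac1m\mathbf{1}^\top\mathbf{y}_k$. Parameters. $\hat\gamma_k:=\max_j\gamma_{j,k}=\hat\gamma/(k+\Gamma)^a$, $\lambda_k=\lambda/(k+\Gamma)^b$, with $\hat\gamma,\lambda,\Gamma,a,b>0$, $a>b$, $a+b<1$, $2a+3b<2$, $\Gamma\ge1$, $\Gamma\ge(4/(\hat\gamma\lambda\mu_f\tau))^{1/(1-a-b)}$ for a constant $\tau>0$; and $\alpha_k:=\frac1m u^\top\boldsymbol\gamma_kv\ge\theta\hat\gamma_k$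 for all $k\ge0$, for some $\theta>0$. $L_k:=L_F+\lambda_kL_f$, $\Lambda_k:=|1-\lambda_{k+1}/\lambda_k|$. Norms. For a vector norm $\|\cdot\|$ on $\mathbb{R}^m$, extend it to $W\in\mathbb{R}^{m\times p}$ by $\|W\|=\|(\|W_{\bullet1}\|,\dots,\|W_{\bullet p}\|)\|_2$ (columns $W_{\bullet j}$), and to square $m\times m$ matrices as the induced operator norm. Let $\|\cdot\|_R,\|\cdot\|_C$ be vector norms on $\mathbb{R}^m$ (so extended) with $\sigma_R:=\|R-\frac1m\mathbf{1}u^\top\|_R<1$, $\sigma_C:=\|C-\frac1m v\mathbf{1}^\top\|_C<1$, and $\|W\|_2\le\|W\|_R$, $\|W\|_2\le\|W\|_C$ for all $W$; let $\delta_{R,C},\delta_{C,2}>0$ satisfy $\|W\|_R\le\delta_{R,C}\|W\|_C$, $\|W\|_C\le\delta_{C,2}\|W\|_2$ for all $W$. $c_0:=\delta_{C,2}\|I-\frac1m v\mathbf{1}^\top\|_C$. Error vector. For $k\ge1$, $\Delta_k:=\big(\|\bar x_k-x^*_{\lambda_{k-1}}\|_2,\ \|\mathbf{x}_k-\mathbf{1}\bar x_k\|_R,\ \|\mathbf{y}_k-v\bar y_k\|_C\big)^\top$. Constants. $\bar\theta:=u^\top v/m$. $\hat\Gamma_2:=\max\{(L_0\hat\gamma u^\top v/m)^{1/a},\ (\hat\gamma u^\top vL_0^2/(m\mu_f\lambda))^{1/(a-b)}\}$. $c_1:=(0.5\mu_f\bar\theta\lambda)\sigma_R\delta_{R,C}c_0L_0\|R\|_2\|v\|_2\frac{L_0}{\sqrt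 m}+\frac{\bar\theta L_0}{\sqrt m}\sigma_R\delta_{R,C}c_0L_0\|R\|_2\|v\|_2L_0+\frac{\|u\|_2}{m}\sigma_RL_0\|v\|_R\,c_0L_0\|R\|_2\|v\|_2\frac{L_0}{\sqrt m}$; $c_2:=(0.5\mu_f\bar\theta\lambda)\sigma_R\delta_{R,C}c_0L_0(\|R-I\|_2+2\Lambda_0)+\frac{1-\sigma_C}{2}\frac{\bar\theta L_0}{\sqrt m}\sigma_RL_0\|v\|_R+\frac{\bar\theta L_0}{\sqrt m}\sigma_R\delta_{R,C}c_0L_0\,2\sqrt m\Lambda_0+\frac{\|u\|_2}{m}\sigma_RL_0\|v\|_R\,c_0L_0(\|R-I\|_2+2\Lambda_0)+\frac{1-\sigma_R}{2}c_0L_0\|R\|_2\|v\|_2L_0\frac{\|u\|_2}{m}$; $c_3:=\frac18\mu_f\theta(1-\sigma_R)(1-\sigma_C)$; $c_4:=\frac{1-\sigma_R}{2}c_0L_0\sqrt m\frac{\|u\|_2}{m}$. $\hat\Gamma_3:=\max\Big\{\hat\Gamma_2,\ \Big(\frac{\mu_f\lambda\hat\gamma u^\top v+2\hat\gamma\|v\|_RL_0}{(1-\sigma_R)\sqrt m}\Big)^{1/a},\ \Big(\frac{\mu_f\lambda\hat\gamma u^\top v+2\hat\gamma c_0L_0\|R\|_2}{1-\sigma_C}\Big)^{1/a},\ \Big(\frac{0.5\mu_f\lambda\hat\gamma u^\top v}{m}\Big)^{1/(a+b)},\ \Big(\frac{3c_1\hat\gamma^2}{c_3\lambda}\Big)^{1/(2a-b)},\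 \Big(\frac{3c_2\hat\gamma}{c_3\lambda}\Big)^{1/(a-b)},\ \Big(\frac{3c_4}{c_3\lambda}\Big)^{1/(1-b)}\Big\}$. *)

theory Defs
  imports "HOL-Analysis.Analysis"
begin

text \<open>Agents are indexed by a finite type 'm (so m = CARD('m)),
 coordinates of points of R^n by a finite type 'n. A stacked iterate
 (an m x n matrix whose rows are agent points) has type real^'n^'m;
 row i is W$i.\<close>

definition strongly_convex :: "real \<Rightarrow> ('a::real_normed_vector \<Rightarrow> real) \<Rightarrow> bool" where
  "strongly_convex \<mu> f \<longleftrightarrow>
     (\<forall>x y. \<forall>t::real. 0 \<le> t \<and> t \<le> 1 \<longrightarrow>
        f (t *\<^sub>R x + (1 - t) *\<^sub>R y)
          \<le> t * f x + (1 - t) * f y - \<mu> / 2 * t * (1 - t) * (norm (x - y))\<^sup>2)"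

definition monotone_op :: "('a::real_inner \<Rightarrow> 'a) \<Rightarrow> bool" where
  "monotone_op F \<longleftrightarrow> (\<forall>x y. (F x - F y) \<bullet> (x - y) \<ge> 0)"

definition SOL :: "('a::real_inner \<Rightarrow> 'a) \<Rightarrow> 'a set" where
  "SOL F = {x. \<forall>y. F x \<bullet> (y - x) \<ge> 0}"

definition is_vnorm :: "(real^'m \<Rightarrow> real) \<Rightarrow> bool" where
  "is_vnorm N \<longleftrightarrow>
     (\<forall>w. 0 \<le> N w) \<and> (\<forall>w. N w = 0 \<longleftrightarrow> w = 0) \<and>
     (\<forall>c w. N (c *\<^sub>R w) = \<bar>c\<bar> * N w) \<and> (\<forall>w z. N (w + z) \<le> N w + N z)"

definition ext_norm :: "(real^'m \<Rightarrow> real) \<Rightarrow> real^'p^'m \<Rightarrow> real" where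
  "ext_norm N W = norm (\<chi> j. N (column j W))"

definition op_norm :: "(real^'m \<Rightarrow> real) \<Rightarrow> real^'m^'m \<Rightarrow> real" where
  "op_norm N A = (SUP w\<in>{w. w \<noteq> 0}. N (A *v w) / N w)"

definition spec_norm :: "real^'m^'m \<Rightarrow> real" where
  "spec_norm A = onorm (\<lambda>w. A *v w)"

definition graph_edges :: "real^'m^'m \<Rightarrow> ('m \<times> 'm) set" where
  "graph_edges B = {(j, i). B $ i $ j > 0}"

text \<open>Roots of spanning trees of G_B: vertices from which every vertex is
  reachable by a directed path (a directed spanning tree rooted at r
  exists iff every vertex is reachable from r).\<close>
definition tree_roots :: "real^'m^'m \<Rightarrow> 'm set" where
  "tree_roots B = {r. \<forall>i. (r, i) \<in> (graph_edges B)\<^sup>*}"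

definition reg_sol :: "('a \<Rightarrow> 'a::real_vector) \<Rightarrow> ('a \<Rightarrow> 'a) \<Rightarrow> real \<Rightarrow> 'a" where
  "reg_sol F gf lam = (THE x. F x + lam *\<^sub>R gf x = 0)"

end

theory Submission
  imports Defs
begin
definition mm :: "real^'m^'m \<Rightarrow> real^'n^'m \<Rightarrow> real^'n^'m" where
  "mm A W = (\<chi> i. \<Sum>j\<in>UNIV. A$i$j *\<^sub>R W$j)"

lemma column_mm: "column l (mm A W) = A *v column l W"
  by (simp add: mm_def column_def matrix_vector_mult_def vec_eq_iff sum_component mult.commute)

lemma vn_props:
  assumes "is_vnorm N"
  shows "0 \<le> N w" "N (c *\<^sub>R w) = \<bar>c\<bar> * N w" "N (w + z) \<le> N w + N z" "N 0 = 0"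
    "N (- w) = N w" "N (w - z) \<le> N w + N z"
proof -
  show a: "0 \<le> N w" "N (c *\<^sub>R w) = \<bar>c\<bar> * N w" "N (w + z) \<le> N w + N z" "N 0 = 0"
    using assms unfolding is_vnorm_def by auto
  show b: "N (- w) = N w" using assms unfolding is_vnorm_def
    by (metis abs_minus_cancel abs_one mult_1 scaleR_minus1_left)
  have "N (w + (- z)) \<le> N w + N (-z)" using assms unfolding is_vnorm_def by blast
  moreover have "N (-z) = N z" using assms unfolding is_vnorm_def
    by (metis abs_minus_cancel abs_one mult_1 scaleR_minus1_left)
  ultimately show "N (w - z) \<le> N w + N z" by simp
qed

lemma norm_vec_mono:
  fixes a b :: "real^'p"
  assumes "\<forall>l. 0 \<le> a$l \<and> a$l \<le> b$l"
  shows "norm a \<le> norm b"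
  unfolding norm_vec_def
  by (rule L2_set_mono; simp; smt (verit) assms)

lemma frob_cols: "norm (W::real^'n^'m) = norm (\<chi> l. norm (column l W))"
proof -
  have "(norm W)^2 = (\<Sum>i\<in>UNIV. (norm (W$i))^2)"
    unfolding norm_vec_def L2_set_def by (simp add: sum_nonneg)
  also have "\<dots> = (\<Sum>i\<in>UNIV. \<Sum>l\<in>UNIV. (W$i$l)^2)"
    unfolding norm_vec_def L2_set_def by (simp add: sum_nonneg)
  also have "\<dots> = (\<Sum>l\<in>UNIV. \<Sum>i\<in>UNIV. (W$i$l)^2)" by (rule sum.swap)
  also have "\<dots> = (\<Sum>l\<in>UNIV. (norm (column l W))^2)"
    unfolding norm_vec_def L2_set_def column_def by (simp add: sum_nonneg)
  also have "\<dots> = (norm (\<chi> l. norm (column l W)))^2"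
    unfolding norm_vec_def[of "\<chi> l. norm (column l W)"] L2_set_def by (simp add: sum_nonneg)
  finally show ?thesis by (simp add: power2_eq_iff_nonneg)
qed

lemma ext_norm_nonneg: "0 \<le> ext_norm N W" unfolding ext_norm_def by simp

lemma ext_norm_add:
  assumes "is_vnorm N"
  shows "ext_norm N (W + Z) \<le> ext_norm N W + ext_norm N Z"
proof -
  have "ext_norm N (W + Z) \<le> norm ((\<chi> l. N (column l W)) + (\<chi> l. N (column l Z)))"
    unfolding ext_norm_def
    by (rule norm_vec_mono) (auto simp: column_def vn_props[OF assms] plus_vec_def
         vn_props(3)[OF assms, of "\<chi> i. W $ i $ _" "\<chi> i. Z $ i $ _", simplified plus_vec_def, simplified])
  also have "\<dots> \<le> ext_norm N W + ext_norm N Z" unfolding ext_norm_def by (rule norm_triangle_ineq)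
  finally show ?thesis .
qed

lemma ext_norm_diff:
  assumes "is_vnorm N"
  shows "ext_norm N (W - Z) \<le> ext_norm N W + ext_norm N Z"
proof -
  have "ext_norm N (W + (-Z)) \<le> ext_norm N W + ext_norm N (-Z)" by (rule ext_norm_add[OF assms])
  moreover have "ext_norm N (-Z) = ext_norm N Z"
  proof -
    have "column l (-Z) = - column l Z" for l by (simp add: column_def vec_eq_iff)
    then show ?thesis unfolding ext_norm_def using vn_props(5)[OF assms] by simp
  qed
  ultimately show ?thesis by simp
qed

lemma ext_norm_ge:
  assumes "\<forall>w. norm w \<le> N w"
  shows "norm W \<le> ext_norm N W"
  unfolding ext_norm_def frob_cols[of W]
  by (rule norm_vec_mono) (use assms in auto)

lemma ext_norm_le:
  fixes N :: "real^'m \<Rightarrow> real" and W :: "real^'p^'m"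
  assumes "\<forall>w. N w \<le> K * norm w" "is_vnorm N"
  shows "ext_norm N W \<le> K * norm W"
proof -
  have K: "0 \<le> K"
  proof -
    have "N (axis undefined 1) \<le> K * norm (axis undefined 1 :: real^'m)" using assms(1)[rule_format, of "axis undefined 1"] .
    moreover have "0 < N (axis undefined 1 :: real^'m)" using assms(2) unfolding is_vnorm_def
      by (metis axis_eq_0_iff less_eq_real_def zero_neq_one)
    ultimately show ?thesis by (simp add: zero_less_mult_iff)
  qed
  have "ext_norm N W \<le> norm (\<chi> l. K * norm (column l W))"
    unfolding ext_norm_def by (rule norm_vec_mono) (use assms vn_props(1)[OF assms(2)] in auto)
  also have "(\<chi> l. K * norm (column l W)) = K *\<^sub>R (\<chi> l. norm (column l W))" by (simp add: vec_eq_iff)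
  also have "norm \<dots> = K * norm W" using K frob_cols[of W] by simp
  finally show ?thesis .
qed

lemma op_norm_bound:
  fixes N :: "real^'m \<Rightarrow> real" and A :: "real^'m^'m"
  assumes N: "is_vnorm N" and ge: "\<forall>w. norm w \<le> N w" and le: "\<forall>w. N w \<le> K * norm w"
  shows "N (A *v w) \<le> op_norm N A * N w" "0 \<le> op_norm N A"
proof -
  have bdd: "bdd_above ((\<lambda>w. N (A *v w) / N w) ` {w. w \<noteq> 0})"
  proof (rule bdd_aboveI2)
    fix w :: "real^'m" assume "w \<in> {w. w \<noteq> 0}"
    then have w0: "w \<noteq> 0" by simp
    then have Nw: "N w \<ge> norm w" "norm w > 0" using ge by auto
    have "N (A *v w) \<le> K * norm (A *v w)" using le by blast
    also have "\<dots> \<le> K * (onorm ((*v) A) * norm w)"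
    proof (rule mult_left_mono)
      show "norm (A *v w) \<le> onorm ((*v) A) * norm w" by (rule onorm) simp
      show "0 \<le> K" using le[rule_format, of w] Nw
        by (smt (verit) N mult_nonpos_nonneg norm_ge_zero vn_props(1))
    qed
    finally have "N (A *v w) / N w \<le> K * (onorm ((*v) A) * norm w) / N w"
      by (rule divide_right_mono) (use Nw vn_props(1)[OF N] in auto)
    also have "\<dots> = K * onorm ((*v) A) * norm w / N w" by (simp add: mult.assoc)
    also have "\<dots> \<le> K * onorm ((*v) A) * 1"
    proof -
      have "0 \<le> K" using le[rule_format, of w] Nw
        by (smt (verit) N mult_nonpos_nonneg norm_ge_zero vn_props(1))
      moreover have "0 \<le> onorm ((*v) A)" by (rule onorm_pos_le) simp
      moreover have "norm w / N w \<le> 1" using Nw by (smt (verit) divide_le_eq_1)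
      ultimately show ?thesis
        by (metis mult_left_mono mult_nonneg_nonneg times_divide_eq_right)
    qed
    finally show "N (A *v w) / N w \<le> K * onorm ((*v) A)" by simp
  qed
  show "N (A *v w) \<le> op_norm N A * N w"
  proof (cases "w = 0")
    case True then show ?thesis using vn_props(4)[OF N] by simp
  next
    case False
    then have "N (A *v w) / N w \<le> op_norm N A" unfolding op_norm_def
      by (intro cSUP_upper bdd) simp
    moreover have "N w > 0" using False ge by (smt (verit) zero_less_norm_iff)
    ultimately show ?thesis by (simp add: divide_le_eq)
  qed
  have "N (A *v axis undefined 1) / N (axis undefined 1) \<le> op_norm N A" unfolding op_norm_def
    by (intro cSUP_upper bdd) (simp add: axis_eq_0_iff)
  moreover have "0 \<le> N (A *v axis undefined 1) / N (axis undefined 1)" using vn_props(1)[OF N] by simp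
  ultimately show "0 \<le> op_norm N A" by linarith
qed

lemma ext_norm_mm:
  assumes N: "is_vnorm N" and ge: "\<forall>w. norm w \<le> N w" and le: "\<forall>w. N w \<le> K * norm w"
  shows "ext_norm N (mm A W) \<le> op_norm N A * ext_norm N W"
proof -
  have "ext_norm N (mm A W) \<le> norm (\<chi> l. op_norm N A * N (column l W))"
    unfolding ext_norm_def column_mm
    by (rule norm_vec_mono) (use op_norm_bound[OF assms] vn_props(1)[OF N] in auto)
  also have "(\<chi> l. op_norm N A * N (column l W)) = op_norm N A *\<^sub>R (\<chi> l. N (column l W))"
    by (simp add: vec_eq_iff)
  also have "norm \<dots> = op_norm N A * ext_norm N W"
    unfolding ext_norm_def using op_norm_bound(2)[OF assms] by simp
  finally show ?thesis .
qed

lemma norm_rows_sum: "norm (W::real^'n^'m) \<le> (\<Sum>i\<in>UNIV. norm (W$i))"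
  unfolding norm_vec_def[of W] by (rule L2_set_le_sum) simp

lemma norm_scale_rows:
  fixes W :: "real^'n^'m"
  assumes "\<forall>i. W$i = x"
  shows "norm (\<chi> i. c i *\<^sub>R W$i) = norm (\<chi> i. c i) * norm (x::real^'n)"
  using assms unfolding norm_vec_def[of "\<chi> i. c i *\<^sub>R W$i"] norm_vec_def[of "\<chi> i. c i"] L2_set_def
  by (simp add: power_mult_distrib sum_distrib_right[symmetric] real_sqrt_mult)

lemma norm_scale_rows_le:
  fixes W :: "real^'n^'m"
  assumes "\<forall>i. 0 \<le> c i \<and> c i \<le> g"
  shows "norm (\<chi> i. c i *\<^sub>R W$i) \<le> g * norm W"
proof -
  have g0: "0 \<le> g" using assms by (meson order_trans)
  have "norm (\<chi> i. c i *\<^sub>R W$i) \<le> norm (\<chi> i. g * norm (W$i))"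
    unfolding norm_vec_def[of "\<chi> i. c i *\<^sub>R W$i"] norm_vec_def[of "\<chi> i. g * norm (W$i)"]
    by (rule L2_set_mono) (use assms g0 in \<open>auto intro: mult_right_mono\<close>)
  also have "(\<chi> i. g * norm (W$i)) = g *\<^sub>R (\<chi> i. norm (W$i))" by (simp add: vec_eq_iff)
  also have "norm \<dots> = g * norm W"
  proof -
    have "0 \<le> g" using assms by (meson order_trans)
    moreover have "norm (\<chi> i. norm (W$i)) = norm W" unfolding norm_vec_def by simp
    ultimately show ?thesis by simp
  qed
  finally show ?thesis .
qed

lemma rate:
  fixes V s \<rho> :: "nat \<Rightarrow> real" and C G :: real and N :: nat
  assumes spos: "\<forall>k. s k > 0" and G: "G > 0"
    and sdec: "\<forall>k. s (Suc k) \<ge> (1 - 1 / (real k + G + 1)) * s k"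
    and rec: "\<forall>k\<ge>N. V (Suc k) \<le> (1 - \<rho> k) * V k + C * \<rho> k * s k"
    and rho: "\<forall>k\<ge>N. 2 / (real k + G + 1) \<le> \<rho> k \<and> \<rho> k \<le> 1"
  shows "\<exists>K. \<forall>k. V k \<le> K * s k"
proof -
  define K where "K = max (max (2*C) 0) (Max ((\<lambda>k. V k / s k) ` {..N}))"
  have K0: "K \<ge> 0" "K \<ge> 2 * C" unfolding K_def by auto
  have init: "V k \<le> K * s k" if "k \<le> N" for k
  proof -
    have "V k / s k \<le> Max ((\<lambda>k. V k / s k) ` {..N})" using that by (intro Max_ge) auto
    then have "V k / s k \<le> K" unfolding K_def by linarith
    then show ?thesis using spos by (simp add: divide_le_eq)
  qed
  have "V k \<le> K * s k" for k
  proof (induction k)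
    case 0 then show ?case using init by simp
  next
    case (Suc k)
    show ?case
    proof (cases "Suc k \<le> N")
      case True then show ?thesis using init by blast
    next
      case False
      then have kN: "k \<ge> N" by simp
      have r: "2 / (real k + G + 1) \<le> \<rho> k" "\<rho> k \<le> 1" using rho kN by auto
      have r0: "0 \<le> \<rho> k" using r(1) G by (smt (verit) divide_nonneg_nonneg of_nat_0_le_iff)
      have sk: "s k > 0" using spos by blast
      have "V (Suc k) \<le> (1 - \<rho> k) * V k + C * \<rho> k * s k" using rec kN by blast
      also have "\<dots> \<le> (1 - \<rho> k) * (K * s k) + (K/2) * \<rho> k * s k"
        apply (rule add_mono)
        apply (rule mult_left_mono) using Suc.IH r apply auto[2]
        apply (rule mult_right_mono)+ using K0 r0 sk by auto
      also have "\<dots> = K * s k * (1 - \<rho> k / 2)" by (simp add: algebra_simps)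
      also have "\<dots> \<le> K * s k * (1 - 1 / (real k + G + 1))"
        apply (rule mult_left_mono) using r(1) K0 sk by auto
      also have "\<dots> \<le> K * s (Suc k)" using sdec K0
        by (metis mult.assoc mult.commute mult_left_mono)
      finally show ?thesis .
    qed
  qed
  then show ?thesis by blast
qed

lemma FO_ineq:
  fixes fs :: "'a::euclidean_space \<Rightarrow> real"
  assumes d: "\<forall>z. (fs has_derivative (\<lambda>h. gs z \<bullet> h)) (at z)" and sc: "strongly_convex \<mu> fs"
  shows "fs x + gs x \<bullet> (y - x) + \<mu>/2 * (norm (y - x))\<^sup>2 \<le> fs y"
proof -
  define dd where "dd = y - x"
  define \<phi> where "\<phi> t = fs (x + t *\<^sub>R dd)" for t :: real
  have "((fs \<circ> (\<lambda>t. x + t *\<^sub>R dd)) has_derivative ((\<lambda>h. gs x \<bullet> h) \<circ> (\<lambda>t. t *\<^sub>R dd))) (at 0)"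
    by (rule diff_chain_at) (auto intro!: derivative_eq_intros simp: d[rule_format, of x, simplified])
  moreover have "((\<lambda>h. gs x \<bullet> h) \<circ> (\<lambda>t. t *\<^sub>R dd)) = (*) (gs x \<bullet> dd)"
    by (auto simp: fun_eq_iff)
  ultimately have "(\<phi> has_field_derivative (gs x \<bullet> dd)) (at 0)"
    unfolding has_field_derivative_def \<phi>_def by (simp add: o_def)
  then have "(\<phi> has_field_derivative (gs x \<bullet> dd)) (at 0 within {0<..})"
    by (rule has_field_derivative_at_within)
  then have L: "((\<lambda>t. (\<phi> t - \<phi> 0) / (t - 0)) \<longlongrightarrow> gs x \<bullet> dd) (at_right 0)"
    using has_field_derivative_iff by blast
  have R: "((\<lambda>t. fs y - fs x - \<mu>/2 * (1 - t) * (norm dd)\<^sup>2) \<longlongrightarrow> fs y - fs x - \<mu>/2 * (1 - 0) * (norm dd)\<^sup>2) (at_right 0)"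
    by (intro tendsto_intros)
  have ev: "\<forall>\<^sub>F t in at_right 0. (\<phi> t - \<phi> 0) / (t - 0) \<le> fs y - fs x - \<mu>/2 * (1 - t) * (norm dd)\<^sup>2"
    using eventually_at_right_real[OF zero_less_one]
  proof (rule eventually_mono)
    fix t :: real assume t: "t \<in> {0<..<1}"
    have "fs (t *\<^sub>R y + (1 - t) *\<^sub>R x) \<le> t * fs y + (1 - t) * fs x - \<mu> / 2 * t * (1 - t) * (norm (y - x))\<^sup>2"
      using sc t unfolding strongly_convex_def by auto
    moreover have "t *\<^sub>R y + (1 - t) *\<^sub>R x = x + t *\<^sub>R dd" by (simp add: dd_def algebra_simps)
    ultimately have "\<phi> t - \<phi> 0 \<le> t * (fs y - fs x - \<mu>/2 * (1 - t) * (norm dd)\<^sup>2)"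
      unfolding \<phi>_def dd_def by (simp add: algebra_simps)
    then show "(\<phi> t - \<phi> 0) / (t - 0) \<le> fs y - fs x - \<mu>/2 * (1 - t) * (norm dd)\<^sup>2"
      using t by (simp add: divide_le_eq mult.commute)
  qed
  have "gs x \<bullet> dd \<le> fs y - fs x - \<mu>/2 * (1 - 0) * (norm dd)\<^sup>2"
    by (rule tendsto_le[OF _ R L ev]) simp
  then show ?thesis unfolding dd_def by simp
qed

lemma strong_mono_grad:
  fixes fs :: "'a::euclidean_space \<Rightarrow> real"
  assumes d: "\<forall>z. (fs has_derivative (\<lambda>h. gs z \<bullet> h)) (at z)" and sc: "strongly_convex \<mu> fs"
  shows "\<mu> * (norm (x - y))\<^sup>2 \<le> (gs x - gs y) \<bullet> (x - y)"
proof -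
  have 1: "fs x + gs x \<bullet> (y - x) + \<mu>/2 * (norm (y - x))\<^sup>2 \<le> fs y" by (rule FO_ineq[OF d sc])
  have 2: "fs y + gs y \<bullet> (x - y) + \<mu>/2 * (norm (x - y))\<^sup>2 \<le> fs x" by (rule FO_ineq[OF d sc])
  have "norm (y - x) = norm (x - y)" by (rule norm_minus_commute)
  moreover have "gs x \<bullet> (y - x) = - (gs x \<bullet> (x - y))" by (simp add: inner_diff_right)
  ultimately show ?thesis using 1 2 by (simp add: inner_diff_left)
qed

lemma contraction_sq:
  fixes T :: "'a::real_inner \<Rightarrow> 'a"
  assumes sm: "c * (norm (x - y))\<^sup>2 \<le> (T x - T y) \<bullet> (x - y)"
    and lp: "norm (T x - T y) \<le> L * norm (x - y)" and eta: "0 \<le> \<eta>"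
  shows "(norm ((x - \<eta> *\<^sub>R T x) - (y - \<eta> *\<^sub>R T y)))\<^sup>2 \<le> (1 - 2 * \<eta> * c + \<eta>\<^sup>2 * L\<^sup>2) * (norm (x - y))\<^sup>2"
proof -
  define a where "a = x - y"
  define b where "b = T x - T y"
  have e: "(x - \<eta> *\<^sub>R T x) - (y - \<eta> *\<^sub>R T y) = a - \<eta> *\<^sub>R b" by (simp add: a_def b_def algebra_simps)
  have "(norm (a - \<eta> *\<^sub>R b))\<^sup>2 = (norm a)\<^sup>2 - 2 * \<eta> * (b \<bullet> a) + \<eta>\<^sup>2 * (norm b)\<^sup>2"
  proof -
    have "(norm (a - \<eta> *\<^sub>R b))\<^sup>2 = (a - \<eta> *\<^sub>R b) \<bullet> (a - \<eta> *\<^sub>R b)" by (rule power2_norm_eq_inner)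
    also have "\<dots> = a \<bullet> a - \<eta> * (a \<bullet> b) - \<eta> * (b \<bullet> a) + \<eta> * \<eta> * (b \<bullet> b)"
      by (simp add: inner_diff_left inner_diff_right right_diff_distrib)
    also have "a \<bullet> b = b \<bullet> a" by (rule inner_commute)
    finally show ?thesis by (simp add: power2_norm_eq_inner[symmetric] power2_eq_square)
  qed
  also have "\<dots> \<le> (norm a)\<^sup>2 - 2 * \<eta> * (c * (norm a)\<^sup>2) + \<eta>\<^sup>2 * (L * norm a)\<^sup>2"
  proof -
    have "2 * \<eta> * (c * (norm a)\<^sup>2) \<le> 2 * \<eta> * (b \<bullet> a)" using sm eta unfolding a_def b_def
      by (intro mult_left_mono) auto
    moreover have "(norm b)\<^sup>2 \<le> (L * norm a)\<^sup>2" using lp unfolding a_def b_def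
      by (intro power_mono) auto
    then have "\<eta>\<^sup>2 * (norm b)\<^sup>2 \<le> \<eta>\<^sup>2 * (L * norm a)\<^sup>2" by (intro mult_left_mono) auto
    ultimately show ?thesis by linarith
  qed
  also have "\<dots> = (1 - 2 * \<eta> * c + \<eta>\<^sup>2 * L\<^sup>2) * (norm a)\<^sup>2" by (simp add: algebra_simps power_mult_distrib)
  finally show ?thesis unfolding e a_def[symmetric] .
qed

lemma zero_exists:
  fixes T :: "'a::euclidean_space \<Rightarrow> 'a"
  assumes sm: "\<forall>x y. c * (norm (x - y))\<^sup>2 \<le> (T x - T y) \<bullet> (x - y)"
    and lp: "\<forall>x y. norm (T x - T y) \<le> L * norm (x - y)" and c: "c > 0" and L: "L > 0"
  shows "\<exists>!z. T z = 0"
proof -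
  define \<eta> where "\<eta> = c / L\<^sup>2"
  define q where "q = sqrt (max 0 (1 - c\<^sup>2 / L\<^sup>2))"
  have eta: "\<eta> > 0" using c L by (simp add: \<eta>_def)
  have "max 0 (1 - c\<^sup>2 / L\<^sup>2) < 1" using c L by (auto simp: max_def)
  then have q: "0 \<le> q" "q < 1" unfolding q_def by auto
  have "\<exists>!x. (\<lambda>x. x - \<eta> *\<^sub>R T x) x = x"
  proof (rule banach_fix_type[OF q])
    show "\<forall>x y. dist ((\<lambda>x. x - \<eta> *\<^sub>R T x) x) ((\<lambda>x. x - \<eta> *\<^sub>R T x) y) \<le> q * dist x y"
    proof (intro allI)
      fix x y :: 'a
      have "(norm ((x - \<eta> *\<^sub>R T x) - (y - \<eta> *\<^sub>R T y)))\<^sup>2 \<le> (1 - 2 * \<eta> * c + \<eta>\<^sup>2 * L\<^sup>2) * (norm (x - y))\<^sup>2"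
        by (rule contraction_sq[OF sm[rule_format] lp[rule_format] less_imp_le[OF eta]])
      also have "1 - 2 * \<eta> * c + \<eta>\<^sup>2 * L\<^sup>2 = 1 - c\<^sup>2 / L\<^sup>2" using L
        unfolding \<eta>_def by (simp add: power2_eq_square divide_simps)
      also have "(1 - c\<^sup>2 / L\<^sup>2) * (norm (x - y))\<^sup>2 \<le> (q * norm (x - y))\<^sup>2"
      proof -
        have "1 - c\<^sup>2 / L\<^sup>2 \<le> q\<^sup>2" unfolding q_def by simp
        then show ?thesis unfolding power_mult_distrib by (rule mult_right_mono) simp
      qed
      finally have "norm ((x - \<eta> *\<^sub>R T x) - (y - \<eta> *\<^sub>R T y)) \<le> q * norm (x - y)"
        by (rule power2_le_imp_le) (use q in simp)
      then show "dist ((\<lambda>x. x - \<eta> *\<^sub>R T x) x) ((\<lambda>x. x - \<eta> *\<^sub>R T x) y) \<le> q * dist x y"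
        by (simp add: dist_norm)
    qed
  qed
  then obtain z where z: "z - \<eta> *\<^sub>R T z = z" by blast
  then have Tz: "T z = 0" using eta by simp
  show ?thesis
  proof (rule ex1I[of _ z])
    show "T z = 0" by (rule Tz)
    fix w assume "T w = 0"
    then have "c * (norm (w - z))\<^sup>2 \<le> 0" using sm[rule_format, of w z] Tz by simp
    then show "w = z" using c by (simp add: mult_le_0_iff)
  qed
qed

lemma sum_lipschitz:
  fixes F :: "'i \<Rightarrow> 'a::real_normed_vector \<Rightarrow> 'b::real_normed_vector"
  assumes "\<forall>i. lipschitz_on L UNIV (F i)" "finite I"
  shows "norm ((\<Sum>i\<in>I. F i x) - (\<Sum>i\<in>I. F i y)) \<le> real (card I) * L * norm (x - y)"
proof -
  have "norm ((\<Sum>i\<in>I. F i x) - (\<Sum>i\<in>I. F i y)) = norm (\<Sum>i\<in>I. F i x - F i y)" by (simp add: sum_subtractf)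
  also have "\<dots> \<le> (\<Sum>i\<in>I. norm (F i x - F i y))" by (rule norm_sum)
  also have "\<dots> \<le> (\<Sum>i\<in>I. L * norm (x - y))"
    by (rule sum_mono) (use assms(1) in \<open>auto simp: lipschitz_on_def dist_norm\<close>)
  finally show ?thesis by simp
qed

lemma lip_norm:
  assumes "lipschitz_on L UNIV F"
  shows "norm (F x - F y) \<le> L * norm (x - y)" "0 \<le> L"
  using assms by (auto simp: lipschitz_on_def dist_norm)

lemma ev_pow:
  assumes r: "r > 0" and G: "\<Gamma> \<ge> 0"
  shows "eventually (\<lambda>k. M \<le> (real k + \<Gamma>) powr r) sequentially"
proof -
  define M' where "M' = max M 1"
  define N where "N = nat \<lceil>M' powr (1/r)\<rceil>"
  show ?thesis unfolding eventually_sequentially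
  proof (intro exI allI impI)
    fix k assume "N \<le> k"
    then have "M' powr (1/r) \<le> real k + \<Gamma>" unfolding N_def using G
      by (smt (verit) of_nat_le_iff real_nat_ceiling_ge)
    then have "(M' powr (1/r)) powr r \<le> (real k + \<Gamma>) powr r"
      by (intro powr_mono2) (use r in auto)
    moreover have "(M' powr (1/r)) powr r = M'" using r unfolding M'_def
      by (simp add: powr_powr)
    ultimately show "M \<le> (real k + \<Gamma>) powr r" unfolding M'_def by linarith
  qed
qed

locale seqs =
  fixes \<gamma>h lam \<Gamma> a b :: real
  assumes par: "\<gamma>h > 0" "lam > 0" "\<Gamma> \<ge> 1" "a > 0" "b > 0" "a > b" "a + b < 1"
begin

definition g :: "nat \<Rightarrow> real" where "g k = \<gamma>h / (real k + \<Gamma>) powr a"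
definition l :: "nat \<Rightarrow> real" where "l k = lam / (real k + \<Gamma>) powr b"
definition s :: "nat \<Rightarrow> real" where "s k = 1 / (real k + \<Gamma>) powr (1 - a - b)"

lemma t_ge1: "real k + \<Gamma> \<ge> 1" using par by simp

lemma pow_ge1: "r \<ge> 0 \<Longrightarrow> (real k + \<Gamma>) powr r \<ge> 1"
  using t_ge1 by (simp add: ge_one_powr_ge_zero)

lemma g_pos: "g k > 0" and l_pos: "l k > 0" and s_pos: "s k > 0"
  using par t_ge1 unfolding g_def l_def s_def by auto

lemma div_le_self: "(x::real) \<ge> 0 \<Longrightarrow> P \<ge> 1 \<Longrightarrow> x / P \<le> x"
  using divide_left_mono[of 1 P x] by simp

lemma g_le: "g k \<le> \<gamma>h" and l_le: "l k \<le> lam"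
  unfolding g_def l_def using par pow_ge1[of a k] pow_ge1[of b k] div_le_self by auto

lemma l_mono: "l (Suc k) \<le> l k"
  unfolding l_def using par t_ge1
  by (intro divide_left_mono powr_mono2) auto

lemma s_dec: "s (Suc k) \<ge> (1 - 1 / (real k + \<Gamma> + 1)) * s k"
proof -
  define t where "t = real k + \<Gamma>"
  have t: "t \<ge> 1" using t_ge1 unfolding t_def .
  define r where "r = 1 - a - b"
  have r: "0 < r" "r \<le> 1" using par unfolding r_def by auto
  have "(t / (t + 1)) powr 1 \<le> (t / (t + 1)) powr r"
    by (rule powr_mono') (use t r in auto)
  then have "t / (t + 1) \<le> t powr r / (t + 1) powr r" using t by (simp add: powr_divide)
  then have "t / (t + 1) * (1 / t powr r) \<le> 1 / (t + 1) powr r" using t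
    by (simp add: divide_simps mult.commute)
  moreover have "1 - 1 / (t + 1) = t / (t + 1)" using t by (simp add: field_simps)
  moreover have "real (Suc k) + \<Gamma> = t + 1" unfolding t_def by simp
  ultimately show ?thesis unfolding s_def r_def t_def[symmetric] by (simp only:)
qed

lemma gls: "g k * l k * s k = \<gamma>h * lam / (real k + \<Gamma>)"
proof -
  define t where "t = real k + \<Gamma>"
  have t: "t \<ge> 1" using t_ge1 unfolding t_def .
  have "t = t powr (a + b + (1 - a - b))" using t by simp
  also have "\<dots> = t powr a * t powr b * t powr (1 - a - b)" by (simp only: powr_add)
  finally have "t powr a * t powr b * t powr (1 - a - b) = t" by simp
  then show ?thesis unfolding g_def l_def s_def t_def[symmetric] by (simp add: field_simps)
qed

lemma inv_le_s: "1 / (real k + \<Gamma>) \<le> s k"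
proof -
  have "(real k + \<Gamma>) powr (1 - a - b) \<le> real k + \<Gamma>"
    using powr_mono[of "1-a-b" 1 "real k + \<Gamma>"] par t_ge1[of k] by simp
  moreover have "0 < (real k + \<Gamma>) powr (1 - a - b)" using t_ge1[of k] by simp
  ultimately show ?thesis unfolding s_def using t_ge1[of k]
    by (intro divide_left_mono) (auto simp: mult_pos_pos)
qed

lemma s_lim: "s \<longlonglongrightarrow> 0"
proof -
  have "filterlim (\<lambda>k. \<Gamma> + real k) at_top sequentially"
    by (rule filterlim_tendsto_add_at_top[OF tendsto_const filterlim_real_sequentially])
  then have "filterlim (\<lambda>k. real k + \<Gamma>) at_top sequentially" by (simp add: add.commute)
  then have "((\<lambda>k. (real k + \<Gamma>) powr (- (1 - a - b))) \<longlongrightarrow> 0) sequentially"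
    by (rule tendsto_neg_powr[rotated]) (use par in auto)
  moreover have "(\<lambda>k. (real k + \<Gamma>) powr (- (1 - a - b))) = s"
    by (rule ext) (simp only: s_def powr_minus_divide)
  ultimately show ?thesis by simp
qed

lemma ev_g_le_l:
  assumes e: "\<epsilon> > 0" shows "eventually (\<lambda>k. g k \<le> \<epsilon> * l k) sequentially"
proof -
  have "eventually (\<lambda>k. \<gamma>h / (\<epsilon> * lam) \<le> (real k + \<Gamma>) powr (a - b)) sequentially"
    by (rule ev_pow) (use par in auto)
  then show ?thesis
  proof (rule eventually_mono)
    fix k assume h: "\<gamma>h / (\<epsilon> * lam) \<le> (real k + \<Gamma>) powr (a - b)"
    define t where "t = real k + \<Gamma>"
    have t: "t \<ge> 1" using t_ge1 unfolding t_def .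
    define A where "A = t powr (a - b)"
    define B where "B = t powr b"
    have AB: "A > 0" "B > 0" using t unfolding A_def B_def by auto
    have ta: "t powr a = A * B" unfolding A_def B_def by (simp add: powr_add[symmetric])
    have h': "\<gamma>h \<le> \<epsilon> * lam * A" using h e par unfolding A_def t_def
      by (simp add: divide_le_eq mult.commute)
    have "\<gamma>h / (A * B) \<le> (\<epsilon> * lam * A) / (A * B)"
      by (rule divide_right_mono[OF h']) (use AB in simp)
    also have "\<dots> = \<epsilon> * (lam / B)" using AB by simp
    finally show "g k \<le> \<epsilon> * l k" unfolding g_def l_def t_def[symmetric] ta B_def .
  qed
qed

lemma ev_g_le:
  assumes e: "\<epsilon> > 0" shows "eventually (\<lambda>k. g k \<le> \<epsilon>) sequentially"
proof -
  have "eventually (\<lambda>k. \<gamma>h / \<epsilon> \<le> (real k + \<Gamma>) powr a) sequentially"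
    by (rule ev_pow) (use par in auto)
  then show ?thesis
  proof (rule eventually_mono)
    fix k assume h: "\<gamma>h / \<epsilon> \<le> (real k + \<Gamma>) powr a"
    have P: "(real k + \<Gamma>) powr a > 0" using t_ge1[of k] by simp
    have "\<gamma>h \<le> \<epsilon> * (real k + \<Gamma>) powr a" using h e by (simp add: divide_le_eq mult.commute)
    then show "g k \<le> \<epsilon>" unfolding g_def using P by (simp add: divide_le_eq mult.commute)
  qed
qed

lemma ev_dl_le_g: "eventually (\<lambda>k. l k / (real k + \<Gamma>) \<le> g k) sequentially"
proof -
  have "eventually (\<lambda>k. lam / \<gamma>h \<le> (real k + \<Gamma>) powr (1 + b - a)) sequentially"
    by (rule ev_pow) (use par in auto)
  then show ?thesis
  proof (rule eventually_mono)
    fix k assume h: "lam / \<gamma>h \<le> (real k + \<Gamma>) powr (1 + b - a)"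
    define t where "t = real k + \<Gamma>"
    have t: "t \<ge> 1" using t_ge1 unfolding t_def .
    define A where "A = t powr (1 + b - a)"
    define B where "B = t powr a"
    have AB: "A > 0" "B > 0" using t unfolding A_def B_def by auto
    have tb: "t powr b * t = A * B" unfolding A_def B_def
    proof -
      have "t powr b * t = t powr b * t powr 1" using t by simp
      also have "\<dots> = t powr (b + 1)" by (simp add: powr_add)
      also have "\<dots> = t powr (1 + b - a + a)" by (simp add: algebra_simps)
      also have "\<dots> = t powr (1 + b - a) * t powr a" by (simp only: powr_add)
      finally show "t powr b * t = t powr (1 + b - a) * t powr a" .
    qed
    have h': "lam \<le> \<gamma>h * A" using h par unfolding A_def t_def
      by (simp add: divide_le_eq mult.commute)
    have "lam / (t powr b * t) = lam / (A * B)" using tb by simp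
    also have "\<dots> \<le> (\<gamma>h * A) / (A * B)"
      by (rule divide_right_mono[OF h']) (use AB in simp)
    also have "\<dots> = \<gamma>h / B" using AB by simp
    finally show "l k / (real k + \<Gamma>) \<le> g k" unfolding g_def l_def t_def[symmetric] B_def
      by simp
  qed
qed

lemma ev_rho:
  assumes c: "c > 0" shows "eventually (\<lambda>k. 2 / (real k + \<Gamma> + 1) \<le> c * g k * l k) sequentially"
proof -
  have "eventually (\<lambda>k. 2 / (c * \<gamma>h * lam) \<le> (real k + \<Gamma>) powr (1 - a - b)) sequentially"
    by (rule ev_pow) (use par in auto)
  then show ?thesis
  proof (rule eventually_mono)
    fix k assume h: "2 / (c * \<gamma>h * lam) \<le> (real k + \<Gamma>) powr (1 - a - b)"
    define t where "t = real k + \<Gamma>"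
    have t: "t \<ge> 1" using t_ge1 unfolding t_def .
    have "g k * l k * s k = \<gamma>h * lam / t" using gls unfolding t_def .
    then have gl: "g k * l k = \<gamma>h * lam * t powr (1 - a - b) / t"
      unfolding s_def t_def[symmetric] using t by (simp add: field_simps)
    have "2 \<le> c * \<gamma>h * lam * t powr (1 - a - b)" using h par c unfolding t_def
      by (simp add: divide_le_eq mult.commute)
    then have "2 / t \<le> c * \<gamma>h * lam * t powr (1 - a - b) / t" using t by (simp add: divide_right_mono)
    also have "\<dots> = c * (g k * l k)" unfolding gl by simp
    also have "\<dots> = c * g k * l k" by simp
    finally have "2 / t \<le> c * g k * l k" .
    moreover have "2 / (t + 1) \<le> 2 / t" using t by (simp add: frac_le)
    ultimately show "2 / (real k + \<Gamma> + 1) \<le> c * g k * l k" unfolding t_def by linarith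
  qed
qed

lemma ev_const:
  assumes c: "c > 0" shows "eventually (\<lambda>k. 2 / (real k + \<Gamma> + 1) \<le> c) sequentially"
proof -
  have "eventually (\<lambda>k. 2 / c \<le> (real k + \<Gamma>) powr 1) sequentially"
    by (rule ev_pow) (use par in auto)
  then show ?thesis
  proof (rule eventually_mono)
    fix k assume h: "2 / c \<le> (real k + \<Gamma>) powr 1"
    then have "2 \<le> c * (real k + \<Gamma>)" using c t_ge1[of k] by (simp add: divide_le_eq mult.commute)
    then have "2 \<le> c * (real k + \<Gamma> + 1)" using c by (simp add: algebra_simps)
    then show "2 / (real k + \<Gamma> + 1) \<le> c" using t_ge1[of k] by (simp add: divide_le_eq mult.commute)
  qed
qed

end

lemma mul_le_of_le_div: "0 < (A::real) \<Longrightarrow> G \<le> X / (8*A) \<Longrightarrow> A * G \<le> X / 8"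
proof -
  assume A: "0 < A" and G: "G \<le> X / (8*A)"
  have "A * G \<le> A * (X/(8*A))" using A G by (intro mult_left_mono) auto
  also have "\<dots> = X/8" using A by simp
  finally show ?thesis .
qed

lemma cancel_mid: "(Z::real) \<noteq> 0 \<Longrightarrow> (X / Z) * (Z / Y) = X / Y"
  by simp

context seqs begin

lemma lyap:
  fixes e p q dl d :: "nat \<Rightarrow> real" and A c \<sigma>R \<sigma>C D :: real
  assumes nn: "\<forall>k. 0 \<le> e k \<and> 0 \<le> p k \<and> 0 \<le> q k"
    and A: "A > 0" and c: "c > 0" and sR: "0 \<le> \<sigma>R" "\<sigma>R < 1" and sC: "0 \<le> \<sigma>C" "\<sigma>C < 1"
    and dl: "\<forall>k. 0 \<le> dl k \<and> dl k \<le> l k / (real k + \<Gamma>)"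
    and d: "\<forall>k. d k \<le> D / (real k + \<Gamma>)"
    and rec: "eventually (\<lambda>k. e (Suc k) \<le> (1 - c * g k * l k) * e k + A * g k * (p k + q k) + d k
       \<and> p (Suc k) \<le> \<sigma>R * p k + A * g k * (q k + e k + p k)
       \<and> q (Suc k) \<le> \<sigma>C * q k + A * (p k + g k * (q k + e k + p k)) + A * dl k * (1 + e k + p k)) sequentially"
  shows "\<exists>K. \<forall>k. e k \<le> K * s k \<and> p k \<le> K * s k \<and> q k \<le> K * s k"
proof -
  define w where "w = (1 - \<sigma>R) / (4 * A)"
  have w: "w > 0" "w * A = (1 - \<sigma>R) / 4" unfolding w_def using A sR by auto
  define \<kappa> where "\<kappa> = c / (2 * A * (1 + 2 * w))"
  have den: "2 * A * (1 + 2 * w) > 0" using A w by simp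
  have \<kappa>: "\<kappa> > 0" "\<kappa> * A * (1 + 2 * w) = c / 2"
  proof -
    show "\<kappa> > 0" unfolding \<kappa>_def using den c by simp
    have "\<kappa> * A * (1 + 2 * w) = c * (A * (1 + 2 * w)) / (2 * A * (1 + 2 * w))"
      unfolding \<kappa>_def by simp
    also have "\<dots> = c / 2" using den by (simp add: field_simps)
    finally show "\<kappa> * A * (1 + 2 * w) = c / 2" .
  qed
  define \<epsilon> where "\<epsilon> k = \<kappa> * l k" for k
  define \<rho>0 where "\<rho>0 = min (1 - \<sigma>R) (1 - \<sigma>C) / 2"
  have \<rho>0: "\<rho>0 > 0" "\<rho>0 \<le> (1 - \<sigma>R) / 2" "\<rho>0 \<le> (1 - \<sigma>C) / 2" "\<rho>0 \<le> 1"
    unfolding \<rho>0_def using sR sC by auto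
  define g0 where "g0 = min (min ((1 - \<sigma>R) / (8 * A)) ((1 - \<sigma>C) / (8 * A))) (min (1/4) (min (w * (1 - \<sigma>C) / (8 * A)) (min ((1 - \<sigma>R) / (4 * c * lam)) ((1 - \<sigma>C) / (4 * c * lam)))))"
  have g0: "g0 > 0" unfolding g0_def using A sR sC w c par by auto
  define g1 where "g1 = min (\<kappa> * (1 - \<sigma>R) / (8 * A)) (\<kappa> * w * (1 - \<sigma>C) / (8 * A))"
  have g1: "g1 > 0" unfolding g1_def using A sR sC w \<kappa> by auto
  have "eventually (\<lambda>k. (e (Suc k) \<le> (1 - c * g k * l k) * e k + A * g k * (p k + q k) + d k
       \<and> p (Suc k) \<le> \<sigma>R * p k + A * g k * (q k + e k + p k)
       \<and> q (Suc k) \<le> \<sigma>C * q k + A * (p k + g k * (q k + e k + p k)) + A * dl k * (1 + e k + p k))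
       \<and> l k / (real k + \<Gamma>) \<le> g k \<and> g k \<le> g0 \<and> g k \<le> g1 * l k
       \<and> 2 / (real k + \<Gamma> + 1) \<le> (c/2) * g k * l k \<and> 2 / (real k + \<Gamma> + 1) \<le> \<rho>0) sequentially"
  proof -
    have r: "eventually (\<lambda>k. 2 / (real k + \<Gamma> + 1) \<le> (c/2) * g k * l k) sequentially"
      using c by (intro ev_rho) simp
    show ?thesis using rec ev_dl_le_g ev_g_le[OF g0] ev_g_le_l[OF g1] r ev_const[OF \<rho>0(1)]
      by (simp add: eventually_conj_iff)
  qed
  then obtain N where N: "\<And>k. k \<ge> N \<Longrightarrow> (e (Suc k) \<le> (1 - c * g k * l k) * e k + A * g k * (p k + q k) + d k
       \<and> p (Suc k) \<le> \<sigma>R * p k + A * g k * (q k + e k + p k)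
       \<and> q (Suc k) \<le> \<sigma>C * q k + A * (p k + g k * (q k + e k + p k)) + A * dl k * (1 + e k + p k))
       \<and> l k / (real k + \<Gamma>) \<le> g k \<and> g k \<le> g0 \<and> g k \<le> g1 * l k
       \<and> 2 / (real k + \<Gamma> + 1) \<le> (c/2) * g k * l k \<and> 2 / (real k + \<Gamma> + 1) \<le> \<rho>0"
    unfolding eventually_sequentially by blast
  have gpos: "\<And>k. 0 < g k" and lpos: "\<And>k. 0 < l k" and lle: "\<And>k. l k \<le> lam" and spos: "\<And>k. 0 < s k"
    using g_pos l_pos l_le s_pos by auto
  have eps0: "\<And>k. 0 \<le> \<epsilon> k" unfolding \<epsilon>_def using \<kappa> lpos by (simp add: less_imp_le)
  have epsmono: "\<And>k. \<epsilon> (Suc k) \<le> \<epsilon> k" unfolding \<epsilon>_def using \<kappa> l_mono by (simp add: less_imp_le)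
  have epsle: "\<And>k. \<epsilon> k \<le> \<kappa> * lam" unfolding \<epsilon>_def using \<kappa> lle by (simp add: less_imp_le)
  define V where "V k = e k + \<epsilon> k * (p k + w * q k)" for k
  define \<rho>1 where "\<rho>1 k = (c/2) * g k * l k" for k
  define C1 where "C1 = (D + \<kappa> * lam * w * A * lam) / ((c/2) * \<gamma>h * lam)"
  have step1: "\<forall>k\<ge>N. V (Suc k) \<le> (1 - \<rho>1 k) * V k + C1 * \<rho>1 k * s k"
  proof (intro allI impI)
    fix k assume k: "k \<ge> N"
    note Nk = N[OF k]
    define E where "E = e k"
    define P where "P = p k"
    define Q where "Q = q k"
    define G where "G = g k"
    define Lk where "Lk = l k"
    define \<epsilon>k where "\<epsilon>k = \<epsilon> k"
    define Dl where "Dl = dl k"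
    define \<rho> where "\<rho> = \<rho>1 k"
    have EPQ: "0 \<le> E" "0 \<le> P" "0 \<le> Q" using nn unfolding E_def P_def Q_def by auto
    have G: "0 < G" "G \<le> g0" "G \<le> g1 * Lk" using gpos Nk unfolding G_def Lk_def by auto
    have Lk: "0 < Lk" "Lk \<le> lam" using lpos lle unfolding Lk_def by auto
    have ek: "0 \<le> \<epsilon>k" "\<epsilon>k = \<kappa> * Lk" unfolding \<epsilon>k_def Lk_def \<epsilon>_def using eps0[of k] \<epsilon>_def by auto
    have Dl: "0 \<le> Dl" "Dl \<le> G" using dl Nk unfolding Dl_def G_def by (auto intro: order_trans)
    have \<rho>: "\<rho> = (c/2) * G * Lk" unfolding \<rho>_def \<rho>1_def G_def Lk_def by simp
    have AG: "A * G \<le> (1 - \<sigma>R) / 8" "A * G \<le> (1 - \<sigma>C) / 8" "G \<le> 1/4" "A * G \<le> w * (1 - \<sigma>C) / 8"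
    proof -
      have "G \<le> (1 - \<sigma>R) / (8 * A)" "G \<le> (1 - \<sigma>C) / (8 * A)" "G \<le> 1/4" "G \<le> w * (1 - \<sigma>C) / (8 * A)"
        using G(2) unfolding g0_def by auto
      then show "A * G \<le> (1 - \<sigma>R) / 8" "A * G \<le> (1 - \<sigma>C) / 8" "G \<le> 1/4" "A * G \<le> w * (1 - \<sigma>C) / 8"
        using A mul_le_of_le_div by auto
    qed
    have \<rho>small: "\<rho> \<le> (1 - \<sigma>R) / 8" "\<rho> \<le> (1 - \<sigma>C) / 8" "0 \<le> \<rho>"
    proof -
      have "G \<le> (1 - \<sigma>R) / (4 * c * lam)" "G \<le> (1 - \<sigma>C) / (4 * c * lam)" using G(2) unfolding g0_def by auto
      then have "c * lam * G \<le> (1 - \<sigma>R) / 4" "c * lam * G \<le> (1 - \<sigma>C) / 4" using c par by (auto simp: field_simps)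
      moreover have "(c/2) * G * Lk \<le> (c/2) * G * lam" using Lk G c by (intro mult_left_mono) auto
      moreover have "0 \<le> (c/2) * G * Lk" using Lk G c by auto
      ultimately show "\<rho> \<le> (1 - \<sigma>R) / 8" "\<rho> \<le> (1 - \<sigma>C) / 8" "0 \<le> \<rho>" unfolding \<rho> by (auto simp: field_simps)
    qed
    have AGe: "A * G \<le> \<epsilon>k * ((1 - \<sigma>R) / 8)" "A * G \<le> \<epsilon>k * (w * (1 - \<sigma>C) / 8)"
    proof -
      have "g1 * Lk \<le> \<kappa> * (1 - \<sigma>R) / (8 * A) * Lk" "g1 * Lk \<le> \<kappa> * w * (1 - \<sigma>C) / (8 * A) * Lk"
        unfolding g1_def using Lk by (intro mult_right_mono; simp)+
      then have "G \<le> \<kappa> * (1 - \<sigma>R) / (8 * A) * Lk" "G \<le> \<kappa> * w * (1 - \<sigma>C) / (8 * A) * Lk"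
        using G(3) by linarith+
      then show "A * G \<le> \<epsilon>k * ((1 - \<sigma>R) / 8)" "A * G \<le> \<epsilon>k * (w * (1 - \<sigma>C) / 8)"
        unfolding ek(2) using A by (auto simp: field_simps)
    qed
    have rec1: "e (Suc k) \<le> (1 - c * G * Lk) * E + A * G * (P + Q) + d k"
      and rec2: "p (Suc k) \<le> \<sigma>R * P + A * G * (Q + E + P)"
      and rec3: "q (Suc k) \<le> \<sigma>C * Q + A * (P + G * (Q + E + P)) + A * Dl * (1 + E + P)"
      using Nk unfolding E_def P_def Q_def G_def Lk_def Dl_def by auto
    have pq1: "0 \<le> p (Suc k) + w * q (Suc k)" using nn w by auto
    have "V (Suc k) \<le> e (Suc k) + \<epsilon>k * (p (Suc k) + w * q (Suc k))"
      unfolding V_def \<epsilon>k_def using epsmono[of k] pq1 by (simp add: mult_right_mono)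
    also have "\<dots> \<le> ((1 - c * G * Lk) * E + A * G * (P + Q) + d k)
        + \<epsilon>k * ((\<sigma>R * P + A * G * (Q + E + P)) + w * (\<sigma>C * Q + A * (P + G * (Q + E + P)) + A * Dl * (1 + E + P)))"
    proof (rule add_mono[OF rec1], rule mult_left_mono[OF _ ek(1)], rule add_mono[OF rec2])
      show "w * q (Suc k) \<le> w * (\<sigma>C * Q + A * (P + G * (Q + E + P)) + A * Dl * (1 + E + P))"
        using rec3 w by (simp add: mult_left_mono)
    qed
    also have "\<dots> = (1 - c * G * Lk + \<epsilon>k * (A * G) + \<epsilon>k * (w * A * G) + \<epsilon>k * (w * A * Dl)) * E
        + (A * G + \<epsilon>k * (\<sigma>R + A * G + w * A * (1 + G + Dl))) * P
        + (A * G + \<epsilon>k * (A * G + w * (\<sigma>C + A * G))) * Q + (d k + \<epsilon>k * (w * A * Dl))"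
      by (simp add: algebra_simps)
    also have "\<dots> \<le> (1 - \<rho>) * E + (\<epsilon>k * (1 - \<rho>)) * P + (\<epsilon>k * w * (1 - \<rho>)) * Q
        + (D + \<kappa> * lam * w * A * lam) / (real k + \<Gamma>)"
    proof (intro add_mono mult_right_mono EPQ)
      have "\<epsilon>k * (w * A * Dl) \<le> \<epsilon>k * (w * A * G)"
        using Dl ek w A by (intro mult_left_mono) auto
      moreover have "\<epsilon>k * (A * G) + \<epsilon>k * (w * A * G) + \<epsilon>k * (w * A * G) = (\<kappa> * A * (1 + 2 * w)) * G * Lk"
        unfolding ek(2) by (simp add: algebra_simps)
      ultimately show "1 - c * G * Lk + \<epsilon>k * (A * G) + \<epsilon>k * (w * A * G) + \<epsilon>k * (w * A * Dl) \<le> 1 - \<rho>"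
        unfolding \<rho> \<kappa>(2) by linarith
    next
      have "w * A * (1 + G + Dl) \<le> ((1 - \<sigma>R) / 4) * (3/2)"
        unfolding w(2) using sR Dl AG(3) by (intro mult_left_mono) auto
      then have "\<sigma>R + A * G + w * A * (1 + G + Dl) \<le> \<sigma>R + (1 - \<sigma>R) / 2" using AG(1) by linarith
      then have "\<epsilon>k * (\<sigma>R + A * G + w * A * (1 + G + Dl)) \<le> \<epsilon>k * (\<sigma>R + (1 - \<sigma>R) / 2)"
        using ek(1) by (rule mult_left_mono)
      moreover have "\<epsilon>k * ((1 - \<sigma>R) / 8) + \<epsilon>k * (\<sigma>R + (1 - \<sigma>R) / 2) \<le> \<epsilon>k * (1 - \<rho>)"
      proof -
        have "(1 - \<sigma>R) / 8 + (\<sigma>R + (1 - \<sigma>R) / 2) \<le> 1 - \<rho>" using \<rho>small sR by (simp add: field_simps)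
        then have "\<epsilon>k * ((1 - \<sigma>R) / 8 + (\<sigma>R + (1 - \<sigma>R) / 2)) \<le> \<epsilon>k * (1 - \<rho>)"
          using ek(1) by (rule mult_left_mono)
        then show ?thesis by (simp add: algebra_simps)
      qed
      ultimately show "A * G + \<epsilon>k * (\<sigma>R + A * G + w * A * (1 + G + Dl)) \<le> \<epsilon>k * (1 - \<rho>)"
        using AGe(1) by linarith
    next
      have "A * G + w * (\<sigma>C + A * G) \<le> w * (\<sigma>C + (1 - \<sigma>C) / 4)"
      proof -
        have "w * (A * G) \<le> w * ((1 - \<sigma>C) / 8)" using AG(2) w by (intro mult_left_mono) auto
        then show ?thesis using AG(4) by (simp add: algebra_simps)
      qed
      then have "\<epsilon>k * (A * G + w * (\<sigma>C + A * G)) \<le> \<epsilon>k * (w * (\<sigma>C + (1 - \<sigma>C) / 4))"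
        using ek(1) by (rule mult_left_mono)
      moreover have "\<epsilon>k * (w * (1 - \<sigma>C) / 8) + \<epsilon>k * (w * (\<sigma>C + (1 - \<sigma>C) / 4)) \<le> \<epsilon>k * w * (1 - \<rho>)"
      proof -
        have "(1 - \<sigma>C) / 8 + (\<sigma>C + (1 - \<sigma>C) / 4) \<le> 1 - \<rho>" using \<rho>small sC by (simp add: field_simps)
        then have "(\<epsilon>k * w) * ((1 - \<sigma>C) / 8 + (\<sigma>C + (1 - \<sigma>C) / 4)) \<le> (\<epsilon>k * w) * (1 - \<rho>)"
          using ek(1) w by (intro mult_left_mono) auto
        then show ?thesis by (simp add: algebra_simps)
      qed
      ultimately show "A * G + \<epsilon>k * (A * G + w * (\<sigma>C + A * G)) \<le> \<epsilon>k * w * (1 - \<rho>)"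
        using AGe(2) by linarith
    next
      have "d k \<le> D / (real k + \<Gamma>)" using d by blast
      moreover have "\<epsilon>k * (w * A * Dl) \<le> (\<kappa> * lam) * (w * A * (lam / (real k + \<Gamma>)))"
      proof (rule mult_mono)
        show "\<epsilon>k \<le> \<kappa> * lam" unfolding \<epsilon>k_def by (rule epsle)
        have "Dl \<le> lam / (real k + \<Gamma>)"
          using dl Lk t_ge1[of k] unfolding Dl_def Lk_def by (meson divide_right_mono order_trans less_imp_le order.trans le_add_same_cancel1 zero_le_one)
        then show "w * A * Dl \<le> w * A * (lam / (real k + \<Gamma>))" using w A by (intro mult_left_mono) auto
        show "0 \<le> \<kappa> * lam" using \<kappa> par by auto
        show "0 \<le> w * A * Dl" using w A Dl by auto
      qed
      ultimately show "d k + \<epsilon>k * (w * A * Dl) \<le> (D + \<kappa> * lam * w * A * lam) / (real k + \<Gamma>)"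
        by (simp add: add_divide_distrib mult.assoc)
    qed
    also have "\<dots> = (1 - \<rho>1 k) * V k + C1 * \<rho>1 k * s k"
    proof -
      have "C1 * \<rho>1 k * s k = C1 * (c/2) * (g k * l k * s k)" unfolding \<rho>1_def by simp
      also have "\<dots> = ((D + \<kappa> * lam * w * A * lam) / ((c/2) * \<gamma>h * lam)) * (((c/2) * \<gamma>h * lam) / (real k + \<Gamma>))"
        unfolding gls C1_def by simp
      also have "\<dots> = (D + \<kappa> * lam * w * A * lam) / (real k + \<Gamma>)"
        by (rule cancel_mid) (use c par in simp)
      finally show ?thesis unfolding V_def \<rho>_def E_def P_def Q_def \<epsilon>k_def by (simp add: algebra_simps)
    qed
    finally show "V (Suc k) \<le> (1 - \<rho>1 k) * V k + C1 * \<rho>1 k * s k" .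
  qed
  have rho1: "\<forall>k\<ge>N. 2 / (real k + \<Gamma> + 1) \<le> \<rho>1 k \<and> \<rho>1 k \<le> 1"
  proof (intro allI impI conjI)
    fix k assume k: "k \<ge> N"
    show "2 / (real k + \<Gamma> + 1) \<le> \<rho>1 k" using N[OF k] unfolding \<rho>1_def by simp
    have "g k \<le> (1 - \<sigma>R) / (4 * c * lam)" using N[OF k] unfolding g0_def by auto
    then have "c * lam * g k \<le> (1 - \<sigma>R) / 4" using c par by (auto simp: field_simps)
    moreover have "(c/2) * g k * l k \<le> (c/2) * g k * lam" using gpos lle c by (intro mult_left_mono) (auto simp: less_imp_le)
    moreover have "0 \<le> (c/2) * g k * l k" using gpos lpos c by (auto simp: less_imp_le)
    ultimately show "\<rho>1 k \<le> 1" unfolding \<rho>1_def using sR by (auto simp: field_simps)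
  qed
  obtain K1 where K1: "\<forall>k. V k \<le> K1 * s k"
    using rate[of s \<Gamma> N V \<rho>1 C1] spos par step1 rho1 s_dec by auto
  have eK1: "e k \<le> K1 * s k" for k
  proof -
    have "0 \<le> \<epsilon> k * (p k + w * q k)" using eps0[of k] nn w by auto
    then show ?thesis using K1 unfolding V_def by (smt (verit))
  qed
  define W where "W k = p k + w * q k" for k
  define Ke where "Ke = A + 2 * w * A"
  define C2 where "C2 = (Ke * K1 + w * A * lam) / \<rho>0"
  have step2: "\<forall>k\<ge>N. W (Suc k) \<le> (1 - \<rho>0) * W k + C2 * \<rho>0 * s k"
  proof (intro allI impI)
    fix k assume k: "k \<ge> N"
    note Nk = N[OF k]
    define E where "E = e k"
    define P where "P = p k"
    define Q where "Q = q k"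
    define G where "G = g k"
    define Dl where "Dl = dl k"
    have EPQ: "0 \<le> E" "0 \<le> P" "0 \<le> Q" using nn unfolding E_def P_def Q_def by auto
    have G: "0 < G" "G \<le> g0" using gpos Nk unfolding G_def by auto
    have Dl: "0 \<le> Dl" "Dl \<le> G" using dl Nk unfolding Dl_def G_def by (auto intro: order_trans)
    have AG: "A * G \<le> (1 - \<sigma>R) / 8" "A * G \<le> (1 - \<sigma>C) / 8" "G \<le> 1/4" "A * G \<le> w * (1 - \<sigma>C) / 8"
    proof -
      have "G \<le> (1 - \<sigma>R) / (8 * A)" "G \<le> (1 - \<sigma>C) / (8 * A)" "G \<le> 1/4" "G \<le> w * (1 - \<sigma>C) / (8 * A)"
        using G(2) unfolding g0_def by auto
      then show "A * G \<le> (1 - \<sigma>R) / 8" "A * G \<le> (1 - \<sigma>C) / 8" "G \<le> 1/4" "A * G \<le> w * (1 - \<sigma>C) / 8"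
        using A mul_le_of_le_div by auto
    qed
    have rec2: "p (Suc k) \<le> \<sigma>R * P + A * G * (Q + E + P)"
      and rec3: "q (Suc k) \<le> \<sigma>C * Q + A * (P + G * (Q + E + P)) + A * Dl * (1 + E + P)"
      using Nk unfolding E_def P_def Q_def G_def Dl_def by auto
    have "W (Suc k) \<le> (\<sigma>R * P + A * G * (Q + E + P)) + w * (\<sigma>C * Q + A * (P + G * (Q + E + P)) + A * Dl * (1 + E + P))"
      unfolding W_def using rec2 rec3 w by (intro add_mono mult_left_mono) auto
    also have "\<dots> = (\<sigma>R + A * G + w * A * (1 + G + Dl)) * P + (A * G + w * (\<sigma>C + A * G)) * Q
        + (A * G + w * A * G + w * A * Dl) * E + w * A * Dl"
      by (simp add: algebra_simps)
    also have "\<dots> \<le> (1 - \<rho>0) * P + (w * (1 - \<rho>0)) * Q + Ke * E + w * A * (lam * s k)"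
    proof (intro add_mono mult_right_mono EPQ)
      have "w * A * (1 + G + Dl) \<le> ((1 - \<sigma>R) / 4) * (3/2)"
        unfolding w(2) using sR Dl AG(3) by (intro mult_left_mono) auto
      moreover have "(1 - \<sigma>R) / 4 * (3/2) = 3/8 - 3/8 * \<sigma>R" by simp
      ultimately show "\<sigma>R + A * G + w * A * (1 + G + Dl) \<le> 1 - \<rho>0" using AG(1) \<rho>0 by linarith
    next
      have "A * G + w * (\<sigma>C + A * G) \<le> w * (\<sigma>C + (1 - \<sigma>C) / 4)"
      proof -
        have "w * (A * G) \<le> w * ((1 - \<sigma>C) / 8)" using AG(2) w by (intro mult_left_mono) auto
        then show ?thesis using AG(4) by (simp add: algebra_simps)
      qed
      also have "\<dots> \<le> w * (1 - \<rho>0)"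
      proof -
        have "\<sigma>C + (1 - \<sigma>C) / 4 \<le> 1 - \<rho>0" using \<rho>0 sC by (simp add: field_simps)
        then show ?thesis using w by (intro mult_left_mono) auto
      qed
      finally show "A * G + w * (\<sigma>C + A * G) \<le> w * (1 - \<rho>0)" .
    next
      have "A * G \<le> A" using A AG(3) G by (simp add: mult_le_cancel_left1)
      moreover have "w * A * G \<le> w * A" using A w AG(3) G by (simp add: mult_le_cancel_left1)
      moreover have "w * A * Dl \<le> w * A" using A w AG(3) Dl by (simp add: mult_le_cancel_left1)
      ultimately show "A * G + w * A * G + w * A * Dl \<le> Ke" unfolding Ke_def by linarith
    next
      have "Dl \<le> lam / (real k + \<Gamma>)"
      proof -
        have "Dl \<le> l k / (real k + \<Gamma>)" using dl unfolding Dl_def by blast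
        also have "\<dots> \<le> lam / (real k + \<Gamma>)" using lle t_ge1[of k] by (intro divide_right_mono) auto
        finally show ?thesis .
      qed
      also have "\<dots> = lam * (1 / (real k + \<Gamma>))" by simp
      also have "\<dots> \<le> lam * s k" using inv_le_s par by (intro mult_left_mono) auto
      finally show "w * A * Dl \<le> w * A * (lam * s k)" using w A by (intro mult_left_mono) auto
    qed
    also have "\<dots> \<le> (1 - \<rho>0) * W k + C2 * \<rho>0 * s k"
    proof -
      have Ke0: "0 \<le> Ke" unfolding Ke_def using A w by simp
      have "Ke * E \<le> Ke * (K1 * s k)" using eK1 Ke0 unfolding E_def by (intro mult_left_mono) auto
      moreover have "C2 * \<rho>0 * s k = Ke * (K1 * s k) + w * A * (lam * s k)"
      proof -
        have "C2 * \<rho>0 * s k = (Ke * K1 + w * A * lam) * s k" unfolding C2_def using \<rho>0(1) by simp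
        then show ?thesis by (simp add: algebra_simps)
      qed
      ultimately show ?thesis unfolding W_def P_def Q_def by (simp add: algebra_simps)
    qed
    finally show "W (Suc k) \<le> (1 - \<rho>0) * W k + C2 * \<rho>0 * s k" .
  qed
  obtain K2 where K2: "\<forall>k. W k \<le> K2 * s k"
    using rate[of s \<Gamma> N W "\<lambda>_. \<rho>0" C2] spos par step2 N \<rho>0 s_dec by auto
  have pK: "p k \<le> K2 * s k" and qK: "q k \<le> (K2 / w) * s k" for k
  proof -
    have "0 \<le> w * q k" using w nn by simp
    then show "p k \<le> K2 * s k" using K2 unfolding W_def by (smt (verit))
    have "w * q k \<le> K2 * s k" using K2 nn unfolding W_def by (smt (verit))
    then show "q k \<le> (K2 / w) * s k" using w by (simp add: field_simps)
  qed
  show ?thesis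
  proof (intro exI allI conjI)
    fix k
    define K where "K = max K1 (max K2 (K2 / w))"
    have sk: "0 < s k" using spos by simp
    show "e k \<le> K * s k" using eK1[of k] sk unfolding K_def by (smt (verit) mult_right_mono max.cobounded1)
    show "p k \<le> K * s k" using pK[of k] sk unfolding K_def by (smt (verit) mult_right_mono max.cobounded1 max.cobounded2)
    show "q k \<le> K * s k" using qK[of k] sk unfolding K_def by (smt (verit) mult_right_mono max.cobounded1 max.cobounded2)
  qed
qed

end

context seqs begin

lemma l_ratio: "l k \<le> (1 + 1 / (real k + \<Gamma>)) * l (Suc k)"
proof -
  define t where "t = real k + \<Gamma>"
  have t: "t \<ge> 1" using t_ge1 unfolding t_def .
  have "((t + 1) / t) powr b \<le> ((t + 1) / t) powr 1"
    by (rule powr_mono) (use par t in auto)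
  then have "(t + 1) powr b / t powr b \<le> (t + 1) / t" using t by (simp add: powr_divide)
  have "lam / t powr b = (lam / (t + 1) powr b) * ((t + 1) powr b / t powr b)" using t by simp
  also have "\<dots> \<le> (lam / (t + 1) powr b) * ((t + 1) / t)"
    by (rule mult_left_mono) (use \<open>(t + 1) powr b / t powr b \<le> (t + 1) / t\<close> par t in auto)
  finally have "lam / t powr b \<le> (t + 1) / t * (lam / (t + 1) powr b)" by (simp add: mult.commute)
  moreover have "(t + 1) / t = 1 + 1 / t" using t by (simp add: field_simps)
  moreover have "real (Suc k) + \<Gamma> = t + 1" unfolding t_def by simp
  ultimately show ?thesis unfolding l_def t_def[symmetric] by (simp only:)
qed

lemma dl_le: "l k - l (Suc k) \<le> l (Suc k) / (real k + \<Gamma>)" "l k - l (Suc k) \<le> l k / (real k + \<Gamma>)"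
  "0 \<le> l k - l (Suc k)"
proof -
  show 1: "l k - l (Suc k) \<le> l (Suc k) / (real k + \<Gamma>)" using l_ratio[of k] by (simp add: algebra_simps)
  show "0 \<le> l k - l (Suc k)" using l_mono[of k] by simp
  show "l k - l (Suc k) \<le> l k / (real k + \<Gamma>)" using 1 l_mono[of k] t_ge1[of k]
    by (meson divide_right_mono order_trans less_imp_le zero_less_one order.strict_trans2)
qed

lemma l_lim: "l \<longlonglongrightarrow> 0"
proof -
  have "filterlim (\<lambda>k. \<Gamma> + real k) at_top sequentially"
    by (rule filterlim_tendsto_add_at_top[OF tendsto_const filterlim_real_sequentially])
  then have "filterlim (\<lambda>k. real k + \<Gamma>) at_top sequentially" by (simp add: add.commute)
  then have "((\<lambda>k. (real k + \<Gamma>) powr (- b)) \<longlongrightarrow> 0) sequentially"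
    by (rule tendsto_neg_powr[rotated]) (use par in auto)
  then have "((\<lambda>k. lam * (real k + \<Gamma>) powr (- b)) \<longlongrightarrow> lam * 0) sequentially"
    by (intro tendsto_mult tendsto_const)
  moreover have "(\<lambda>k. lam * (real k + \<Gamma>) powr (- b)) = l"
    by (rule ext) (simp add: l_def powr_minus_divide)
  ultimately show ?thesis by simp
qed

end

locale algo =
  fixes f :: "'m::finite \<Rightarrow> real^'n::finite \<Rightarrow> real"
    and gf :: "'m \<Rightarrow> real^'n \<Rightarrow> real^'n"
    and Fi :: "'m \<Rightarrow> real^'n \<Rightarrow> real^'n"
    and \<mu>f Lf LF :: real
    and xs :: "real^'n"
    and R C :: "real^'m^'m"
    and u v :: "real^'m"
    and NR NC :: "real^'m \<Rightarrow> real"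
    and \<delta>RC \<delta>C2 :: real
    and \<gamma> :: "nat \<Rightarrow> 'm \<Rightarrow> real"
    and \<gamma>h lam \<Gamma> a b \<theta> :: real
    and x y :: "nat \<Rightarrow> real^'n^'m"
    and mr \<sigma>R \<sigma>C :: real
    and Fs gs :: "real^'n \<Rightarrow> real^'n"
    and lamk \<gamma>hk :: "nat \<Rightarrow> real"
    and xbar ybar :: "nat \<Rightarrow> real^'n"
  assumes mr: "mr = real CARD('m)"
    and Fs_def: "Fs = (\<lambda>z. \<Sum>i\<in>UNIV. Fi i z)"
    and gs_def: "gs = (\<lambda>z. \<Sum>i\<in>UNIV. gf i z)"
    and lamk_def: "lamk = (\<lambda>k::nat. lam / (real k + \<Gamma>) powr b)"
    and \<gamma>hk_def: "\<gamma>hk = (\<lambda>k::nat. \<gamma>h / (real k + \<Gamma>) powr a)"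
    and xbar_def: "xbar = (\<lambda>k. (1 / mr) *\<^sub>R (\<Sum>i\<in>UNIV. u $ i *\<^sub>R x k $ i))"
    and ybar_def: "ybar = (\<lambda>k. (1 / mr) *\<^sub>R (\<Sum>i\<in>UNIV. y k $ i))"
    and diff: "\<forall>i z. (f i has_derivative (\<lambda>h. gf i z \<bullet> h)) (at z)"
    and mu_pos: "\<mu>f > 0"
    and sconv: "strongly_convex \<mu>f (\<lambda>z. \<Sum>i\<in>UNIV. f i z)"
    and Lf_pos: "Lf > 0" and lip_f: "\<forall>i. lipschitz_on Lf UNIV (gf i)"
    and mono: "monotone_op Fs"
    and LF_pos: "LF > 0" and lip_F: "\<forall>i. lipschitz_on LF UNIV (Fi i)"
    and xs_sol: "xs \<in> SOL Fs"
    and xs_min: "\<forall>z\<in>SOL Fs. (\<Sum>i\<in>UNIV. f i xs) \<le> (\<Sum>i\<in>UNIV. f i z)"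
    and R_row: "R *v (\<chi> i. 1) = (\<chi> i. 1)"
    and C_col: "(\<chi> i. 1) v* C = (\<chi> i. 1)"
    and u_nonneg: "\<forall>i. u $ i \<ge> 0" and u_left: "u v* R = u" and u_sum: "(\<Sum>i\<in>UNIV. u $ i) = mr"
    and v_nonneg: "\<forall>i. v $ i \<ge> 0" and v_right: "C *v v = v" and v_sum: "(\<Sum>i\<in>UNIV. v $ i) = mr"
    and x_step: "\<forall>k i. x (Suc k) $ i = (\<Sum>j\<in>UNIV. R $ i $ j *\<^sub>R (x k $ j - \<gamma> k j *\<^sub>R y k $ j))"
    and y0: "\<forall>i. y 0 $ i = Fi i (x 0 $ i) + lamk 0 *\<^sub>R gf i (x 0 $ i)"
    and y_step: "\<forall>k i. y (Suc k) $ i = (\<Sum>j\<in>UNIV. C $ i $ j *\<^sub>R y k $ j)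
                   + Fi i (x (Suc k) $ i) + lamk (Suc k) *\<^sub>R gf i (x (Suc k) $ i)
                   - Fi i (x k $ i) - lamk k *\<^sub>R gf i (x k $ i)"
    and gam_nonneg: "\<forall>k i. \<gamma> k i \<ge> 0"
    and gam_max: "\<forall>k. Max (range (\<gamma> k)) = \<gamma>hk k"
    and par: "\<gamma>h > 0" "lam > 0" "\<Gamma> \<ge> 1" "a > 0" "b > 0" "a > b" "a + b < 1"
    and theta_pos: "\<theta> > 0"
    and alpha: "\<forall>k. (1 / mr) * (\<Sum>i\<in>UNIV. u $ i * \<gamma> k i * v $ i) \<ge> \<theta> * \<gamma>hk k"
    and NR_norm: "is_vnorm NR" and NC_norm: "is_vnorm NC"
    and \<sigma>R_def: "\<sigma>R = op_norm NR (R - (\<chi> i j. u $ j / mr))"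
    and \<sigma>C_def: "\<sigma>C = op_norm NC (C - (\<chi> i j. v $ i / mr))"
    and sigR: "\<sigma>R < 1" and sigC: "\<sigma>C < 1"
    and NR_ge: "\<forall>w. norm w \<le> NR w" and NC_ge: "\<forall>w. norm w \<le> NC w"
    and dRC: "\<delta>RC > 0" "\<forall>w. NR w \<le> \<delta>RC * NC w"
    and dC2: "\<delta>C2 > 0" "\<forall>w. NC w \<le> \<delta>C2 * norm w"
begin

sublocale sq: seqs \<gamma>h lam \<Gamma> a b using par by unfold_locales auto

lemma lamk_l: "lamk = sq.l" and \<gamma>hk_g: "\<gamma>hk = sq.g"
  unfolding lamk_def \<gamma>hk_def sq.l_def sq.g_def by auto

lemma mr_ge1: "mr \<ge> 1" using mr by simp
lemma mr_pos: "mr > 0" using mr by simp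

lemma NR_le: "\<forall>w. NR w \<le> (\<delta>RC * \<delta>C2) * norm w"
proof
  fix w
  have "NR w \<le> \<delta>RC * NC w" using dRC by blast
  also have "\<dots> \<le> \<delta>RC * (\<delta>C2 * norm w)" using dRC dC2 by (intro mult_left_mono) auto
  finally show "NR w \<le> (\<delta>RC * \<delta>C2) * norm w" by (simp add: mult.assoc)
qed

lemma \<sigma>R_nonneg: "0 \<le> \<sigma>R" unfolding \<sigma>R_def by (rule op_norm_bound(2)[OF NR_norm NR_ge NR_le])
lemma \<sigma>C_nonneg: "0 \<le> \<sigma>C" unfolding \<sigma>C_def by (rule op_norm_bound(2)[OF NC_norm NC_ge dC2(2)])

definition fsum where "fsum z = (\<Sum>i\<in>UNIV. f i z)"

lemma Fs_eq: "Fs z = (\<Sum>i\<in>UNIV. Fi i z)" and gs_eq: "gs z = (\<Sum>i\<in>UNIV. gf i z)"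
  using Fs_def gs_def by auto

lemma fsum_deriv: "(fsum has_derivative (\<lambda>h. gs z \<bullet> h)) (at z)"
proof -
  have "((\<lambda>z. \<Sum>i\<in>UNIV. f i z) has_derivative (\<lambda>h. \<Sum>i\<in>UNIV. gf i z \<bullet> h)) (at z)"
    by (rule has_derivative_sum) (use diff in auto)
  moreover have "(\<lambda>h. \<Sum>i\<in>UNIV. gf i z \<bullet> h) = (\<lambda>h. gs z \<bullet> h)"
    by (simp add: gs_eq inner_sum_left)
  ultimately show ?thesis unfolding fsum_def by simp
qed

lemma fsum_sc: "strongly_convex \<mu>f fsum" using sconv unfolding fsum_def[abs_def] .

lemma FO: "fsum w1 + gs w1 \<bullet> (w2 - w1) + \<mu>f/2 * (norm (w2 - w1))\<^sup>2 \<le> fsum w2"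
  by (rule FO_ineq) (use fsum_deriv fsum_sc in auto)

lemma gs_sm: "\<mu>f * (norm (w1 - w2))\<^sup>2 \<le> (gs w1 - gs w2) \<bullet> (w1 - w2)"
  by (rule strong_mono_grad) (use fsum_deriv fsum_sc in auto)

lemma Fs_mono: "0 \<le> (Fs w1 - Fs w2) \<bullet> (w1 - w2)" using mono unfolding monotone_op_def by blast

lemma Fs_lip: "norm (Fs w1 - Fs w2) \<le> mr * LF * norm (w1 - w2)"
  using sum_lipschitz[OF lip_F, of UNIV w1 w2] unfolding Fs_eq mr by simp

lemma gs_lip: "norm (gs w1 - gs w2) \<le> mr * Lf * norm (w1 - w2)"
  using sum_lipschitz[OF lip_f, of UNIV w1 w2] unfolding gs_eq mr by simp

lemma Fs_xs: "Fs xs = 0"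
proof -
  have "Fs xs \<bullet> ((xs - Fs xs) - xs) \<ge> 0" using xs_sol unfolding SOL_def by blast
  then have "Fs xs \<bullet> Fs xs \<le> 0" by simp
  then show ?thesis by (metis inner_eq_zero_iff inner_ge_zero order_antisym)
qed

definition T :: "nat \<Rightarrow> real^'n \<Rightarrow> real^'n" where "T k z = Fs z + lamk k *\<^sub>R gs z"
definition Lm where "Lm = mr * (LF + lam * Lf)"

lemma lamk_pos: "lamk k > 0" and lamk_le: "lamk k \<le> lam"
  unfolding lamk_l using sq.l_pos sq.l_le by auto

lemma T_sm: "lamk k * \<mu>f * (norm (w1 - w2))\<^sup>2 \<le> (T k w1 - T k w2) \<bullet> (w1 - w2)"
proof -
  have "(T k w1 - T k w2) \<bullet> (w1 - w2) = (Fs w1 - Fs w2) \<bullet> (w1 - w2) + lamk k * ((gs w1 - gs w2) \<bullet> (w1 - w2))"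
    unfolding T_def by (simp add: algebra_simps inner_diff_left inner_add_left)
  moreover have "lamk k * (\<mu>f * (norm (w1 - w2))\<^sup>2) \<le> lamk k * ((gs w1 - gs w2) \<bullet> (w1 - w2))"
    using gs_sm lamk_pos by (intro mult_left_mono) (auto simp: less_imp_le)
  ultimately show ?thesis using Fs_mono[of w1 w2] by (simp add: mult.assoc)
qed

lemma T_lip: "norm (T k w1 - T k w2) \<le> Lm * norm (w1 - w2)"
proof -
  have "norm (T k w1 - T k w2) = norm ((Fs w1 - Fs w2) + lamk k *\<^sub>R (gs w1 - gs w2))"
    unfolding T_def by (simp add: algebra_simps)
  also have "\<dots> \<le> norm (Fs w1 - Fs w2) + lamk k * norm (gs w1 - gs w2)"
    using lamk_pos by (metis abs_of_pos norm_scaleR norm_triangle_ineq)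
  also have "\<dots> \<le> mr * LF * norm (w1 - w2) + lam * (mr * Lf * norm (w1 - w2))"
    using Fs_lip gs_lip lamk_pos lamk_le
    by (intro add_mono mult_mono) (auto simp: less_imp_le mr_pos Lf_pos par)
  also have "\<dots> = Lm * norm (w1 - w2)" unfolding Lm_def by (simp add: algebra_simps)
  finally show ?thesis .
qed

lemma Lm_pos: "Lm > 0" unfolding Lm_def using mr_pos LF_pos Lf_pos par by (simp add: add_pos_pos)

definition z :: "nat \<Rightarrow> real^'n" where "z k = reg_sol Fs gs (lamk k)"

lemma Tz: "T k (z k) = 0"
proof -
  have "\<exists>!w. T k w = 0"
    by (rule zero_exists[of "lamk k * \<mu>f" _ Lm]) (use T_sm T_lip lamk_pos mu_pos Lm_pos in auto)
  then have "T k (THE w. T k w = 0) = 0" by (rule theI')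
  then show ?thesis unfolding z_def reg_sol_def T_def by simp
qed

lemma Fz: "Fs (z k) = - lamk k *\<^sub>R gs (z k)"
  using Tz[of k] unfolding T_def by (simp add: eq_neg_iff_add_eq_0)

lemma gz_xs: "0 \<le> gs (z k) \<bullet> (xs - z k)"
proof -
  have "0 \<le> (Fs (z k) - Fs xs) \<bullet> (z k - xs)" by (rule Fs_mono)
  then have "0 \<le> - lamk k * (gs (z k) \<bullet> (z k - xs))" unfolding Fz Fs_xs by simp
  then have "gs (z k) \<bullet> (z k - xs) \<le> 0" using lamk_pos[of k] by (simp add: mult_le_0_iff)
  then show ?thesis by (simp add: inner_diff_right)
qed

definition Bz where "Bz = norm (gs xs) / \<mu>f"
definition Gb where "Gb = norm (gs xs) + mr * Lf * Bz"

lemma z_bound: "norm (z k - xs) \<le> Bz"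
proof -
  have "\<mu>f * (norm (z k - xs))\<^sup>2 \<le> (gs (z k) - gs xs) \<bullet> (z k - xs)" by (rule gs_sm)
  also have "\<dots> = gs (z k) \<bullet> (z k - xs) - gs xs \<bullet> (z k - xs)" by (simp add: inner_diff_left)
  also have "\<dots> \<le> - (gs xs \<bullet> (z k - xs))" using gz_xs[of k] by (simp add: inner_diff_right)
  also have "\<dots> \<le> norm (gs xs) * norm (z k - xs)"
    by (metis abs_le_iff Cauchy_Schwarz_ineq2 inner_minus_left)
  finally have h: "\<mu>f * (norm (z k - xs))\<^sup>2 \<le> norm (gs xs) * norm (z k - xs)" .
  show ?thesis
  proof (cases "norm (z k - xs) = 0")
    case True then show ?thesis unfolding Bz_def using mu_pos by simp
  next
    case False
    then have "\<mu>f * norm (z k - xs) \<le> norm (gs xs)" using h by (simp add: power2_eq_square)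
    then show ?thesis unfolding Bz_def using mu_pos by (simp add: field_simps)
  qed
qed

lemma Bz_nonneg: "0 \<le> Bz" unfolding Bz_def using mu_pos by simp
lemma Gb_nonneg: "0 \<le> Gb" unfolding Gb_def using Bz_nonneg mr_pos Lf_pos by simp

lemma gz_bound: "norm (gs (z k)) \<le> Gb"
proof -
  have "norm (gs (z k)) \<le> norm (gs xs) + norm (gs (z k) - gs xs)" by (metis norm_triangle_sub add.commute)
  also have "\<dots> \<le> norm (gs xs) + mr * Lf * Bz"
    using gs_lip[of "z k" xs] z_bound[of k] mr_pos Lf_pos
    by (smt (verit) mult_left_mono mult_pos_pos)
  finally show ?thesis unfolding Gb_def .
qed

lemma z_diff: "norm (z (Suc k) - z k) \<le> Gb / \<mu>f / (real k + \<Gamma>)"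
proof -
  define z1 where "z1 = z (Suc k)"
  define z2 where "z2 = z k"
  define l1 where "l1 = lamk (Suc k)"
  define l2 where "l2 = lamk k"
  have l: "0 < l1" "l1 \<le> l2" "l2 - l1 \<le> l1 / (real k + \<Gamma>)"
    unfolding l1_def l2_def lamk_l using sq.l_pos sq.l_mono sq.dl_le by auto
  have "0 \<le> (Fs z1 - Fs z2) \<bullet> (z1 - z2)" by (rule Fs_mono)
  also have "\<dots> = - l1 * ((gs z1 - gs z2) \<bullet> (z1 - z2)) + (l2 - l1) * (gs z2 \<bullet> (z1 - z2))"
    unfolding z1_def z2_def l1_def l2_def Fz by (simp add: algebra_simps inner_diff_left inner_diff_right)
  finally have "l1 * ((gs z1 - gs z2) \<bullet> (z1 - z2)) \<le> (l2 - l1) * (gs z2 \<bullet> (z1 - z2))" by simp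
  moreover have "l1 * (\<mu>f * (norm (z1 - z2))\<^sup>2) \<le> l1 * ((gs z1 - gs z2) \<bullet> (z1 - z2))"
    using gs_sm l by (intro mult_left_mono) auto
  moreover have "(l2 - l1) * (gs z2 \<bullet> (z1 - z2)) \<le> (l2 - l1) * (Gb * norm (z1 - z2))"
  proof (rule mult_left_mono)
    have "gs z2 \<bullet> (z1 - z2) \<le> norm (gs z2) * norm (z1 - z2)" by (rule norm_cauchy_schwarz)
    also have "\<dots> \<le> Gb * norm (z1 - z2)" using gz_bound unfolding z2_def by (intro mult_right_mono) auto
    finally show "gs z2 \<bullet> (z1 - z2) \<le> Gb * norm (z1 - z2)" .
    show "0 \<le> l2 - l1" using l by simp
  qed
  ultimately have h: "l1 * \<mu>f * (norm (z1 - z2))\<^sup>2 \<le> (l2 - l1) * Gb * norm (z1 - z2)"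
    by (simp add: mult.assoc)
  show ?thesis
  proof (cases "norm (z1 - z2) = 0")
    case True then show ?thesis unfolding z1_def z2_def using Gb_nonneg mu_pos sq.t_ge1[of k] by simp
  next
    case False
    then have "l1 * \<mu>f * norm (z1 - z2) \<le> (l2 - l1) * Gb" using h by (simp add: power2_eq_square)
    also have "\<dots> \<le> (l1 / (real k + \<Gamma>)) * Gb" using l Gb_nonneg by (intro mult_right_mono) auto
    finally have "l1 * (\<mu>f * norm (z1 - z2)) \<le> l1 * (Gb / (real k + \<Gamma>))" by (simp add: mult.assoc)
    then have "\<mu>f * norm (z1 - z2) \<le> Gb / (real k + \<Gamma>)" by (rule mult_left_le_imp_le) (use l in simp)
    then have "norm (z1 - z2) \<le> (Gb / (real k + \<Gamma>)) / \<mu>f"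
      using mu_pos pos_le_divide_eq[of \<mu>f "norm (z1 - z2)" "Gb / (real k + \<Gamma>)"] by (simp only: mult.commute)
    then show ?thesis unfolding z1_def z2_def by (simp add: divide_divide_eq_left mult.commute)
  qed
qed

end

context algo begin

lemma z_lim: "z \<longlonglongrightarrow> xs"
proof (rule ccontr)
  assume nl: "\<not> z \<longlonglongrightarrow> xs"
  then obtain \<epsilon> where \<epsilon>: "\<epsilon> > 0" "\<not> eventually (\<lambda>k. dist (z k) xs < \<epsilon>) sequentially"
    unfolding tendsto_iff by auto
  from not_eventually_sequentiallyD[OF \<epsilon>(2)]
  obtain r :: "nat \<Rightarrow> nat" where r: "strict_mono r" "\<forall>n. \<not> dist (z (r n)) xs < \<epsilon>" by auto
  have inball: "\<forall>n. (z \<circ> r) n \<in> cball xs Bz" using z_bound by (simp add: dist_norm norm_minus_commute)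
  obtain lp and r2 :: "nat \<Rightarrow> nat" where lp: "lp \<in> cball xs Bz" "strict_mono r2" "((z \<circ> r) \<circ> r2) \<longlonglongrightarrow> lp"
    using seq_compactE[OF compact_imp_seq_compact[OF compact_cball] inball] by metis
  define h where "h = r \<circ> r2"
  have h: "strict_mono h" using r lp by (simp add: h_def strict_mono_o)
  have zh: "(\<lambda>n. z (h n)) \<longlonglongrightarrow> lp" using lp(3) by (simp add: h_def o_def)
  have lh: "(\<lambda>n. lamk (h n)) \<longlonglongrightarrow> 0" using LIMSEQ_subseq_LIMSEQ[OF sq.l_lim h] lamk_l by (simp add: o_def)
  have Flp: "Fs lp = 0"
  proof -
    have bound: "norm (Fs lp) \<le> mr * LF * norm (lp - z (h n)) + lamk (h n) * Gb" for n
    proof -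
      have "norm (Fs lp) \<le> norm (Fs lp - Fs (z (h n))) + norm (Fs (z (h n)))"
        using norm_triangle_ineq[of "Fs lp - Fs (z (h n))" "Fs (z (h n))"] by simp
      also have "norm (Fs (z (h n))) = lamk (h n) * norm (gs (z (h n)))" unfolding Fz using lamk_pos[of "h n"] by simp
      also have "\<dots> \<le> lamk (h n) * Gb" using gz_bound lamk_pos[of "h n"] by (intro mult_left_mono) (auto simp: less_imp_le)
      finally show ?thesis using Fs_lip[of lp "z (h n)"] by linarith
    qed
    have "(\<lambda>n. mr * LF * norm (lp - z (h n)) + lamk (h n) * Gb) \<longlonglongrightarrow> mr * LF * norm (lp - lp) + 0 * Gb"
      by (intro tendsto_intros zh lh)
    then have "norm (Fs lp) \<le> 0"
      by (intro tendsto_le[OF trivial_limit_sequentially _ tendsto_const]) (use bound in auto)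
    then show ?thesis by simp
  qed
  have "lp \<in> SOL Fs" unfolding SOL_def using Flp by simp
  then have fx: "fsum xs \<le> fsum lp" using xs_min unfolding fsum_def by blast
  have ineq: "fsum (z (h n)) + \<mu>f/2 * (norm (xs - z (h n)))\<^sup>2 \<le> fsum xs" for n
    using FO[of "z (h n)" xs] gz_xs[of "h n"] by linarith
  have cont: "isCont fsum lp" using has_derivative_continuous[OF fsum_deriv] .
  have "(\<lambda>n. fsum (z (h n)) + \<mu>f/2 * (norm (xs - z (h n)))\<^sup>2) \<longlonglongrightarrow> fsum lp + \<mu>f/2 * (norm (xs - lp))\<^sup>2"
    by (intro tendsto_intros isCont_tendsto_compose[OF cont] zh)
  then have "fsum lp + \<mu>f/2 * (norm (xs - lp))\<^sup>2 \<le> fsum xs"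
    by (intro tendsto_le[OF trivial_limit_sequentially tendsto_const]) (use ineq in auto)
  then have "\<mu>f/2 * (norm (xs - lp))\<^sup>2 \<le> 0" using fx by linarith
  then have "lp = xs" using mu_pos by (simp add: mult_le_0_iff)
  then have "eventually (\<lambda>n. dist (z (h n)) xs < \<epsilon>) sequentially" using zh \<epsilon>(1) unfolding tendsto_iff by blast
  then obtain n where "dist (z (h n)) xs < \<epsilon>" by (meson eventually_sequentially order_refl)
  then show False using r(2) unfolding h_def by simp
qed

end

lemma mm_row: "(mm A W) $ i = (\<Sum>j\<in>UNIV. A$i$j *\<^sub>R W$j)"
  by (simp add: mm_def)

context algo begin

definition G :: "nat \<Rightarrow> real^'n^'m" where
  "G k = (\<chi> i. Fi i (x k $ i) + lamk k *\<^sub>R gf i (x k $ i))"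
definition X :: "nat \<Rightarrow> real^'n^'m" where "X k = x k - (\<chi> i. xbar k)"
definition Y :: "nat \<Rightarrow> real^'n^'m" where "Y k = y k - (\<chi> i. v $ i *\<^sub>R ybar k)"
definition Gy :: "nat \<Rightarrow> real^'n^'m" where "Gy k = (\<chi> j. \<gamma> k j *\<^sub>R y k $ j)"
definition JR :: "real^'m^'m" where "JR = (\<chi> i j. u $ j / mr)"
definition JC :: "real^'m^'m" where "JC = (\<chi> i j. v $ i / mr)"

lemma C_colsum: "(\<Sum>i\<in>UNIV. C $ i $ j) = 1"
proof -
  have "((\<chi> i. 1) v* C) $ j = 1" using C_col by simp
  then show ?thesis by (simp add: vector_matrix_mult_def)
qed

lemma R_rowsum: "(\<Sum>j\<in>UNIV. R $ i $ j) = 1"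
proof -
  have "(R *v (\<chi> i. 1)) $ i = 1" using R_row by simp
  then show ?thesis by (simp add: matrix_vector_mult_def)
qed

lemma u_left_comp: "(\<Sum>i\<in>UNIV. u $ i * R $ i $ j) = u $ j"
proof -
  have "(u v* R) $ j = u $ j" using u_left by simp
  then show ?thesis by (simp add: vector_matrix_mult_def)
qed

lemma v_right_comp: "(\<Sum>j\<in>UNIV. C $ i $ j * v $ j) = v $ i"
proof -
  have "(C *v v) $ i = v $ i" using v_right by simp
  then show ?thesis by (simp add: matrix_vector_mult_def)
qed

lemma y_step_G: "y (Suc k) $ i = (\<Sum>j\<in>UNIV. C $ i $ j *\<^sub>R y k $ j) + (G (Suc k) $ i - G k $ i)"
  using y_step unfolding G_def by (simp add: algebra_simps)

lemma tracking: "(\<Sum>i\<in>UNIV. y k $ i) = (\<Sum>i\<in>UNIV. G k $ i)"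
proof (induction k)
  case 0 then show ?case using y0 unfolding G_def by simp
next
  case (Suc k)
  have "(\<Sum>i\<in>UNIV. y (Suc k) $ i) = (\<Sum>i\<in>UNIV. \<Sum>j\<in>UNIV. C $ i $ j *\<^sub>R y k $ j) + (\<Sum>i\<in>UNIV. G (Suc k) $ i - G k $ i)"
    unfolding y_step_G by (simp add: sum.distrib)
  also have "(\<Sum>i\<in>UNIV. \<Sum>j\<in>UNIV. C $ i $ j *\<^sub>R y k $ j) = (\<Sum>j\<in>UNIV. (\<Sum>i\<in>UNIV. C $ i $ j) *\<^sub>R y k $ j)"
    by (subst sum.swap) (simp add: scaleR_sum_left)
  also have "\<dots> = (\<Sum>j\<in>UNIV. y k $ j)" by (simp add: C_colsum)
  finally show ?case using Suc by (simp add: sum_subtractf)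
qed

lemma ybar_G: "ybar k = (1 / mr) *\<^sub>R (\<Sum>i\<in>UNIV. G k $ i)"
  using tracking ybar_def by simp

lemma sum_y: "(\<Sum>i\<in>UNIV. y k $ i) = mr *\<^sub>R ybar k"
  using ybar_def mr_pos by simp

lemma xbar_step: "xbar (Suc k) = (1 / mr) *\<^sub>R (\<Sum>j\<in>UNIV. u $ j *\<^sub>R (x k $ j - \<gamma> k j *\<^sub>R y k $ j))"
proof -
  have "(\<Sum>i\<in>UNIV. u $ i *\<^sub>R x (Suc k) $ i) = (\<Sum>i\<in>UNIV. \<Sum>j\<in>UNIV. (u $ i * R $ i $ j) *\<^sub>R (x k $ j - \<gamma> k j *\<^sub>R y k $ j))"
    using x_step by (simp add: scaleR_sum_right)
  also have "\<dots> = (\<Sum>j\<in>UNIV. (\<Sum>i\<in>UNIV. u $ i * R $ i $ j) *\<^sub>R (x k $ j - \<gamma> k j *\<^sub>R y k $ j))"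
    by (subst sum.swap) (simp add: scaleR_sum_left)
  also have "\<dots> = (\<Sum>j\<in>UNIV. u $ j *\<^sub>R (x k $ j - \<gamma> k j *\<^sub>R y k $ j))"
    using u_left_comp by simp
  finally show ?thesis unfolding xbar_def by simp
qed


lemma cons_x: "X (Suc k) = mm (R - JR) (X k - Gy k)"
proof -
  have "X (Suc k) $ i = mm (R - JR) (X k - Gy k) $ i" for i
  proof -
    define w where "w j = x k $ j - xbar k - \<gamma> k j *\<^sub>R y k $ j" for j
    have wd: "(X k - Gy k) $ j = w j" for j unfolding X_def Gy_def w_def by simp
    have A: "(\<Sum>j\<in>UNIV. R $ i $ j *\<^sub>R w j) = x (Suc k) $ i - xbar k"
    proof -
      have "(\<Sum>j\<in>UNIV. R $ i $ j *\<^sub>R w j) = (\<Sum>j\<in>UNIV. R $ i $ j *\<^sub>R (x k $ j - \<gamma> k j *\<^sub>R y k $ j)) - (\<Sum>j\<in>UNIV. R $ i $ j) *\<^sub>R xbar k"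
        unfolding w_def by (simp add: algebra_simps sum_subtractf scaleR_sum_left sum.distrib)
      then show ?thesis using x_step R_rowsum by simp
    qed
    have B: "(\<Sum>j\<in>UNIV. (u $ j / mr) *\<^sub>R w j) = xbar (Suc k) - xbar k"
    proof -
      have "(\<Sum>j\<in>UNIV. (u $ j / mr) *\<^sub>R w j) = (1 / mr) *\<^sub>R (\<Sum>j\<in>UNIV. u $ j *\<^sub>R (x k $ j - \<gamma> k j *\<^sub>R y k $ j)) - ((\<Sum>j\<in>UNIV. u $ j) / mr) *\<^sub>R xbar k"
        unfolding w_def by (simp add: algebra_simps sum_subtractf scaleR_sum_left scaleR_sum_right sum_divide_distrib sum.distrib)
      then show ?thesis using xbar_step u_sum mr_pos by simp
    qed
    have "mm (R - JR) (X k - Gy k) $ i = (\<Sum>j\<in>UNIV. R $ i $ j *\<^sub>R w j) - (\<Sum>j\<in>UNIV. (u $ j / mr) *\<^sub>R w j)"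
      unfolding mm_row wd JR_def by (simp add: scaleR_left_diff_distrib sum_subtractf)
    also have "\<dots> = x (Suc k) $ i - xbar (Suc k)" unfolding A B by simp
    finally show ?thesis unfolding X_def by simp
  qed
  then show ?thesis by (simp add: vec_eq_iff)
qed

lemma x_diff: "x (Suc k) - x k = mm (R - mat 1) (X k) - mm R (Gy k)"
proof -
  have "(x (Suc k) - x k) $ i = (mm (R - mat 1) (X k) - mm R (Gy k)) $ i" for i
  proof -
    have "mm (R - mat 1) (X k) $ i = (\<Sum>j\<in>UNIV. R $ i $ j *\<^sub>R (x k $ j - xbar k)) - (x k $ i - xbar k)"
      unfolding mm_row X_def by (simp add: scaleR_left_diff_distrib sum_subtractf mat_def if_distrib[of "\<lambda>t. t *\<^sub>R _"] cong: if_cong)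
    also have "\<dots> = (\<Sum>j\<in>UNIV. R $ i $ j *\<^sub>R x k $ j) - x k $ i"
      using R_rowsum by (simp add: scaleR_right_diff_distrib sum_subtractf scaleR_sum_left[symmetric])
    finally have 1: "mm (R - mat 1) (X k) $ i = (\<Sum>j\<in>UNIV. R $ i $ j *\<^sub>R x k $ j) - x k $ i" .
    have 2: "mm R (Gy k) $ i = (\<Sum>j\<in>UNIV. R $ i $ j *\<^sub>R (\<gamma> k j *\<^sub>R y k $ j))" unfolding mm_row Gy_def by simp
    have 3: "x (Suc k) $ i = (\<Sum>j\<in>UNIV. R $ i $ j *\<^sub>R x k $ j) - (\<Sum>j\<in>UNIV. R $ i $ j *\<^sub>R (\<gamma> k j *\<^sub>R y k $ j))"
      using x_step by (simp add: scaleR_right_diff_distrib sum_subtractf)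
    show ?thesis using 1 2 3 by simp
  qed
  then show ?thesis by (simp add: vec_eq_iff)
qed

lemma cons_y: "Y (Suc k) = mm (C - JC) (Y k) + mm (mat 1 - JC) (G (Suc k) - G k)"
proof -
  define D where "D = G (Suc k) - G k"
  have ybs: "ybar (Suc k) = ybar k + (1 / mr) *\<^sub>R (\<Sum>j\<in>UNIV. D $ j)"
    unfolding ybar_G D_def by (simp add: sum_subtractf algebra_simps)
  have "Y (Suc k) $ i = (mm (C - JC) (Y k) + mm (mat 1 - JC) D) $ i" for i
  proof -
    have a: "mm (C - JC) (Y k) $ i = (\<Sum>j\<in>UNIV. C $ i $ j *\<^sub>R y k $ j) - (\<Sum>j\<in>UNIV. C $ i $ j * v $ j) *\<^sub>R ybar k
        - (v $ i / mr) *\<^sub>R (\<Sum>j\<in>UNIV. y k $ j) + (v $ i / mr * (\<Sum>j\<in>UNIV. v $ j)) *\<^sub>R ybar k"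
      unfolding mm_row Y_def JC_def
      by (simp add: algebra_simps sum_subtractf sum.distrib scaleR_sum_left scaleR_sum_right sum_distrib_left sum_divide_distrib)
    have b: "mm (mat 1 - JC) D $ i = D $ i - (v $ i / mr) *\<^sub>R (\<Sum>j\<in>UNIV. D $ j)"
      unfolding mm_row JC_def
      by (simp add: scaleR_left_diff_distrib sum_subtractf mat_def if_distrib[of "\<lambda>t. t *\<^sub>R _"] scaleR_sum_right cong: if_cong)
    have c: "mm (C - JC) (Y k) $ i = (\<Sum>j\<in>UNIV. C $ i $ j *\<^sub>R y k $ j) - v $ i *\<^sub>R ybar k"
      unfolding a v_right_comp sum_y v_sum using mr_pos by (simp add: algebra_simps)
    have ys: "y (Suc k) $ i = (\<Sum>j\<in>UNIV. C $ i $ j *\<^sub>R y k $ j) + D $ i"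
      using y_step_G[of k i] unfolding D_def by simp
    have "Y (Suc k) $ i = y (Suc k) $ i - v $ i *\<^sub>R ybar (Suc k)" unfolding Y_def by simp
    also have "\<dots> = ((\<Sum>j\<in>UNIV. C $ i $ j *\<^sub>R y k $ j) - v $ i *\<^sub>R ybar k) + (D $ i - (v $ i / mr) *\<^sub>R (\<Sum>j\<in>UNIV. D $ j))"
      unfolding ys ybs by (simp add: algebra_simps)
    also have "\<dots> = (mm (C - JC) (Y k) + mm (mat 1 - JC) D) $ i" by (simp only: vector_add_component c b)
    finally show ?thesis .
  qed
  then show ?thesis unfolding D_def by (simp add: vec_eq_iff)
qed

end

context algo begin

definition e where "e k = norm (xbar k - z k)"
definition p where "p k = ext_norm NR (X k)"
definition q where "q k = ext_norm NC (Y k)"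
definition L1 where "L1 = LF + lam * Lf"
definition KR where "KR = \<delta>RC * \<delta>C2"
definition Ti where "Ti k i w = Fi i w + lamk k *\<^sub>R gf i w"

lemma L1_pos: "L1 > 0" unfolding L1_def using LF_pos Lf_pos par by (simp add: add_pos_pos)
lemma Lm_L1: "Lm = mr * L1" unfolding Lm_def L1_def by simp
lemma KR_pos: "KR > 0" unfolding KR_def using dRC dC2 by simp

lemma Ti_lip: "norm (Ti k i w1 - Ti k i w2) \<le> L1 * norm (w1 - w2)"
proof -
  have "norm (Ti k i w1 - Ti k i w2) = norm ((Fi i w1 - Fi i w2) + lamk k *\<^sub>R (gf i w1 - gf i w2))"
    unfolding Ti_def by (simp add: algebra_simps)
  also have "\<dots> \<le> norm (Fi i w1 - Fi i w2) + lamk k * norm (gf i w1 - gf i w2)"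
    using lamk_pos[of k] by (metis abs_of_pos norm_scaleR norm_triangle_ineq)
  also have "\<dots> \<le> LF * norm (w1 - w2) + lam * (Lf * norm (w1 - w2))"
    using lip_norm(1)[OF lip_F[rule_format, of i]] lip_norm(1)[OF lip_f[rule_format, of i]] lamk_pos[of k] lamk_le[of k] Lf_pos
    by (intro add_mono mult_mono) (auto simp: less_imp_le)
  also have "\<dots> = L1 * norm (w1 - w2)" unfolding L1_def by (simp add: algebra_simps)
  finally show ?thesis .
qed

lemma sum_Ti: "(\<Sum>i\<in>UNIV. Ti k i w) = T k w"
  unfolding Ti_def T_def Fs_eq gs_eq by (simp add: sum.distrib scaleR_sum_right)

lemma G_Ti: "G k $ i = Ti k i (x k $ i)" unfolding G_def Ti_def by simp

lemma X_row: "X k $ i = x k $ i - xbar k" unfolding X_def by simp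

lemma normX_p: "norm (X k) \<le> p k" unfolding p_def by (rule ext_norm_ge[OF NR_ge])
lemma normY_q: "norm (Y k) \<le> q k" unfolding q_def by (rule ext_norm_ge[OF NC_ge])
lemma p_nonneg: "0 \<le> p k" unfolding p_def by (rule ext_norm_nonneg)
lemma q_nonneg: "0 \<le> q k" unfolding q_def by (rule ext_norm_nonneg)
lemma e_nonneg: "0 \<le> e k" unfolding e_def by simp

lemma sum_const_le: "(\<Sum>i\<in>(UNIV::'m set). c) = mr * c" using mr by simp

lemma sumG_bound: "norm (\<Sum>i\<in>UNIV. G k $ i) \<le> mr * L1 * (e k + p k)"
proof -
  have eq: "(\<Sum>i\<in>UNIV. G k $ i) = T k (xbar k) + (\<Sum>i\<in>UNIV. Ti k i (x k $ i) - Ti k i (xbar k))"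
    unfolding G_Ti by (simp add: sum_subtractf sum_Ti)
  have 1: "norm (T k (xbar k)) \<le> mr * L1 * e k"
    using T_lip[of k "xbar k" "z k"] Tz[of k] unfolding e_def Lm_L1 by simp
  have "norm (\<Sum>i\<in>UNIV. Ti k i (x k $ i) - Ti k i (xbar k)) \<le> (\<Sum>i\<in>UNIV. norm (Ti k i (x k $ i) - Ti k i (xbar k)))"
    by (rule norm_sum)
  also have "\<dots> \<le> (\<Sum>i\<in>(UNIV::'m set). L1 * p k)"
  proof (rule sum_mono)
    fix i
    have "norm (Ti k i (x k $ i) - Ti k i (xbar k)) \<le> L1 * norm (X k $ i)" using Ti_lip unfolding X_row .
    also have "\<dots> \<le> L1 * p k" using Finite_Cartesian_Product.norm_nth_le[of "X k" i] normX_p[of k] L1_pos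
      by (intro mult_left_mono) auto
    finally show "norm (Ti k i (x k $ i) - Ti k i (xbar k)) \<le> L1 * p k" .
  qed
  also have "\<dots> = mr * L1 * p k" unfolding sum_const_le by simp
  finally have 2: "norm (\<Sum>i\<in>UNIV. Ti k i (x k $ i) - Ti k i (xbar k)) \<le> mr * L1 * p k" .
  show ?thesis unfolding eq using norm_triangle_le[OF add_mono[OF 1 2]] by (simp add: algebra_simps)
qed

lemma ybar_bound: "norm (ybar k) \<le> L1 * (e k + p k)"
proof -
  have "norm (ybar k) = norm (\<Sum>i\<in>UNIV. G k $ i) / mr" unfolding ybar_G using mr_pos by simp
  also have "\<dots> \<le> mr * L1 * (e k + p k) / mr" using sumG_bound mr_pos by (intro divide_right_mono) auto
  finally show ?thesis using mr_pos by simp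
qed

lemma y_bound: "norm (y k) \<le> q k + norm v * L1 * (e k + p k)"
proof -
  have yeq: "y k = Y k + (\<chi> i. v $ i *\<^sub>R ybar k)" unfolding Y_def by simp
  have "norm (\<chi> i. v $ i *\<^sub>R ybar k) = norm v * norm (ybar k)"
    using norm_scale_rows[of "\<chi> i. ybar k" "ybar k" "\<lambda>i. v $ i"] by simp
  also have "\<dots> \<le> norm v * (L1 * (e k + p k))" using ybar_bound by (intro mult_left_mono) auto
  finally have "norm (\<chi> i. v $ i *\<^sub>R ybar k) \<le> norm v * L1 * (e k + p k)" by (simp add: mult.assoc)
  then show ?thesis unfolding yeq using normY_q[of k] norm_triangle_ineq[of "Y k" "\<chi> i. v $ i *\<^sub>R ybar k"] by linarith
qed

lemma gam_le: "\<gamma> k i \<le> \<gamma>hk k"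
proof -
  have "\<gamma> k i \<le> Max (range (\<gamma> k))" by (rule Max_ge) auto
  then show ?thesis using gam_max by simp
qed

lemma Gy_bound: "norm (Gy k) \<le> \<gamma>hk k * norm (y k)"
  unfolding Gy_def by (rule norm_scale_rows_le) (use gam_nonneg gam_le in auto)

lemma JR_eq: "R - JR = R - (\<chi> i j. u $ j / mr)" unfolding JR_def ..

lemma p_rec: "p (Suc k) \<le> \<sigma>R * p k + KR * \<gamma>hk k * norm (y k)"
proof -
  have "p (Suc k) \<le> \<sigma>R * ext_norm NR (X k - Gy k)"
    unfolding p_def cons_x \<sigma>R_def JR_def by (rule ext_norm_mm[OF NR_norm NR_ge NR_le])
  also have "\<dots> \<le> \<sigma>R * (p k + KR * norm (Gy k))"
  proof (rule mult_left_mono[OF _ \<sigma>R_nonneg])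
    have "ext_norm NR (X k - Gy k) \<le> ext_norm NR (X k) + ext_norm NR (Gy k)" by (rule ext_norm_diff[OF NR_norm])
    moreover have "ext_norm NR (Gy k) \<le> KR * norm (Gy k)" unfolding KR_def by (rule ext_norm_le[OF NR_le NR_norm])
    ultimately show "ext_norm NR (X k - Gy k) \<le> p k + KR * norm (Gy k)" unfolding p_def by linarith
  qed
  also have "\<dots> \<le> \<sigma>R * p k + KR * \<gamma>hk k * norm (y k)"
  proof -
    have "\<sigma>R * (KR * norm (Gy k)) \<le> 1 * (KR * norm (Gy k))"
      using sigR KR_pos by (intro mult_right_mono) auto
    also have "\<dots> \<le> KR * (\<gamma>hk k * norm (y k))" using Gy_bound KR_pos by (simp add: mult_left_mono)
    finally show ?thesis by (simp add: algebra_simps)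
  qed
  finally show ?thesis .
qed

definition c0' where "c0' = op_norm NC (mat 1 - JC) * \<delta>C2"
lemma c0'_nonneg: "0 \<le> c0'" unfolding c0'_def using op_norm_bound(2)[OF NC_norm NC_ge dC2(2)] dC2 by simp

lemma q_rec: "q (Suc k) \<le> \<sigma>C * q k + c0' * norm (G (Suc k) - G k)"
proof -
  have "q (Suc k) \<le> ext_norm NC (mm (C - JC) (Y k)) + ext_norm NC (mm (mat 1 - JC) (G (Suc k) - G k))"
    unfolding q_def cons_y by (rule ext_norm_add[OF NC_norm])
  also have "ext_norm NC (mm (C - JC) (Y k)) \<le> \<sigma>C * q k"
    unfolding q_def \<sigma>C_def JC_def by (rule ext_norm_mm[OF NC_norm NC_ge dC2(2)])
  also have "ext_norm NC (mm (mat 1 - JC) (G (Suc k) - G k)) \<le> op_norm NC (mat 1 - JC) * ext_norm NC (G (Suc k) - G k)"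
    by (rule ext_norm_mm[OF NC_norm NC_ge dC2(2)])
  also have "\<dots> \<le> op_norm NC (mat 1 - JC) * (\<delta>C2 * norm (G (Suc k) - G k))"
    by (rule mult_left_mono[OF ext_norm_le[OF dC2(2) NC_norm] op_norm_bound(2)[OF NC_norm NC_ge dC2(2)]])
  finally show ?thesis unfolding c0'_def by (simp add: mult.assoc)
qed

end

lemma tri4: "norm (A1 - A2 - A3 + A4) \<le> norm A1 + norm A2 + norm A3 + (norm A4::real)"
  for A1 A2 A3 A4 :: "'a::real_normed_vector"
proof -
  have "norm (A1 - A2 - A3 + A4) \<le> norm (A1 - A2 - A3) + norm A4" by (rule norm_triangle_ineq)
  also have "norm (A1 - A2 - A3) \<le> norm (A1 - A2) + norm A3" by (rule norm_triangle_ineq4)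
  also have "norm (A1 - A2) \<le> norm A1 + norm A2" by (rule norm_triangle_ineq4)
  finally show ?thesis by simp
qed

context algo begin

lemma Xi_bound: "norm (\<Sum>i\<in>UNIV. Ti k i (x k $ i) - Ti k i (xbar k)) \<le> mr * L1 * p k"
proof -
  have "norm (\<Sum>i\<in>UNIV. Ti k i (x k $ i) - Ti k i (xbar k)) \<le> (\<Sum>i\<in>UNIV. norm (Ti k i (x k $ i) - Ti k i (xbar k)))"
    by (rule norm_sum)
  also have "\<dots> \<le> (\<Sum>i\<in>(UNIV::'m set). L1 * p k)"
  proof (rule sum_mono)
    fix i
    have "norm (Ti k i (x k $ i) - Ti k i (xbar k)) \<le> L1 * norm (X k $ i)" using Ti_lip unfolding X_row .
    also have "\<dots> \<le> L1 * p k" using Finite_Cartesian_Product.norm_nth_le[of "X k" i] normX_p[of k] L1_pos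
      by (intro mult_left_mono) auto
    finally show "norm (Ti k i (x k $ i) - Ti k i (xbar k)) \<le> L1 * p k" .
  qed
  also have "\<dots> = mr * L1 * p k" unfolding sum_const_le by simp
  finally show ?thesis .
qed

lemma u_le: "u $ j \<le> mr"
proof -
  have "u $ j \<le> (\<Sum>i\<in>UNIV. u $ i)" by (rule member_le_sum) (use u_nonneg in auto)
  then show ?thesis using u_sum by simp
qed

lemma v_le: "v $ j \<le> mr"
proof -
  have "v $ j \<le> (\<Sum>i\<in>UNIV. v $ i)" by (rule member_le_sum) (use v_nonneg in auto)
  then show ?thesis using v_sum by simp
qed

definition opRI where "opRI = op_norm NR (R - mat 1)"
definition opR where "opR = op_norm NR R"
lemma opRI_nonneg: "0 \<le> opRI" unfolding opRI_def by (rule op_norm_bound(2)[OF NR_norm NR_ge NR_le])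
lemma opR_nonneg: "0 \<le> opR" unfolding opR_def by (rule op_norm_bound(2)[OF NR_norm NR_ge NR_le])

lemma xdiff_bound: "norm (x (Suc k) - x k) \<le> opRI * p k + opR * KR * \<gamma>hk k * norm (y k)"
proof -
  have "norm (x (Suc k) - x k) \<le> ext_norm NR (x (Suc k) - x k)" by (rule ext_norm_ge[OF NR_ge])
  also have "\<dots> \<le> ext_norm NR (mm (R - mat 1) (X k)) + ext_norm NR (mm R (Gy k))"
    unfolding x_diff by (rule ext_norm_diff[OF NR_norm])
  also have "ext_norm NR (mm (R - mat 1) (X k)) \<le> opRI * p k"
    unfolding opRI_def p_def by (rule ext_norm_mm[OF NR_norm NR_ge NR_le])
  also have "ext_norm NR (mm R (Gy k)) \<le> opR * ext_norm NR (Gy k)"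
    unfolding opR_def by (rule ext_norm_mm[OF NR_norm NR_ge NR_le])
  also have "\<dots> \<le> opR * (KR * (\<gamma>hk k * norm (y k)))"
  proof (rule mult_left_mono[OF _ opR_nonneg])
    have "ext_norm NR (Gy k) \<le> KR * norm (Gy k)" unfolding KR_def by (rule ext_norm_le[OF NR_le NR_norm])
    also have "\<dots> \<le> KR * (\<gamma>hk k * norm (y k))" using Gy_bound KR_pos by (intro mult_left_mono) auto
    finally show "ext_norm NR (Gy k) \<le> KR * (\<gamma>hk k * norm (y k))" .
  qed
  finally show ?thesis by (simp add: mult.assoc)
qed

definition g1 where "g1 = (\<Sum>i\<in>UNIV. norm (gf i xs))"

lemma gf_sum_bound: "(\<Sum>i\<in>UNIV. norm (gf i (x k $ i))) \<le> g1 + mr * Lf * (p k + e k + Bz)"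
proof -
  have "(\<Sum>i\<in>UNIV. norm (gf i (x k $ i))) \<le> (\<Sum>i\<in>UNIV. norm (gf i xs) + Lf * (p k + e k + Bz))"
  proof (rule sum_mono)
    fix i
    have "norm (gf i (x k $ i)) \<le> norm (gf i xs) + norm (gf i (x k $ i) - gf i xs)"
      using norm_triangle_ineq[of "gf i xs" "gf i (x k $ i) - gf i xs"] by simp
    also have "norm (gf i (x k $ i) - gf i xs) \<le> Lf * norm (x k $ i - xs)"
      by (rule lip_norm(1)[OF lip_f[rule_format]])
    also have "norm (x k $ i - xs) \<le> p k + e k + Bz"
    proof -
      have "x k $ i - xs = X k $ i + (xbar k - z k) + (z k - xs)" unfolding X_row by simp
      then have "norm (x k $ i - xs) \<le> norm (X k $ i) + norm (xbar k - z k) + norm (z k - xs)"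
        by (metis norm_triangle_le order_refl add_mono)
      moreover have "norm (X k $ i) \<le> p k" using Finite_Cartesian_Product.norm_nth_le[of "X k" i] normX_p[of k] by simp
      ultimately show ?thesis using z_bound[of k] unfolding e_def by linarith
    qed
    then have "Lf * norm (x k $ i - xs) \<le> Lf * (p k + e k + Bz)" using Lf_pos by (intro mult_left_mono) auto
    finally show "norm (gf i (x k $ i)) \<le> norm (gf i xs) + Lf * (p k + e k + Bz)" by simp
  qed
  also have "\<dots> = g1 + mr * Lf * (p k + e k + Bz)" unfolding g1_def sum.distrib sum_const_le by simp
  finally show ?thesis .
qed

lemma G_diff_bound: "norm (G (Suc k) - G k) \<le> L1 * (mr * norm (x (Suc k) - x k)) + (lamk k - lamk (Suc k)) * (\<Sum>i\<in>UNIV. norm (gf i (x k $ i)))"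
proof -
  have dl: "0 \<le> lamk k - lamk (Suc k)" using sq.dl_le(3) lamk_l by simp
  have "norm (G (Suc k) - G k) \<le> (\<Sum>i\<in>UNIV. norm ((G (Suc k) - G k) $ i))" by (rule norm_rows_sum)
  also have "\<dots> \<le> (\<Sum>i\<in>UNIV. L1 * norm (x (Suc k) - x k) + (lamk k - lamk (Suc k)) * norm (gf i (x k $ i)))"
  proof (rule sum_mono)
    fix i
    have "(G (Suc k) - G k) $ i = (Ti (Suc k) i (x (Suc k) $ i) - Ti (Suc k) i (x k $ i)) - (lamk k - lamk (Suc k)) *\<^sub>R gf i (x k $ i)"
      unfolding G_Ti vector_minus_component Ti_def by (simp add: algebra_simps)
    then have "norm ((G (Suc k) - G k) $ i) \<le> norm (Ti (Suc k) i (x (Suc k) $ i) - Ti (Suc k) i (x k $ i)) + (lamk k - lamk (Suc k)) * norm (gf i (x k $ i))"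
      using norm_triangle_ineq4[of "Ti (Suc k) i (x (Suc k) $ i) - Ti (Suc k) i (x k $ i)" "(lamk k - lamk (Suc k)) *\<^sub>R gf i (x k $ i)"] dl
      by simp
    also have "norm (Ti (Suc k) i (x (Suc k) $ i) - Ti (Suc k) i (x k $ i)) \<le> L1 * norm (x (Suc k) - x k)"
    proof -
      have "norm (Ti (Suc k) i (x (Suc k) $ i) - Ti (Suc k) i (x k $ i)) \<le> L1 * norm (x (Suc k) $ i - x k $ i)" by (rule Ti_lip)
      also have "\<dots> \<le> L1 * norm (x (Suc k) - x k)"
        using Finite_Cartesian_Product.norm_nth_le[of "x (Suc k) - x k" i] L1_pos by (intro mult_left_mono) auto
      finally show ?thesis .
    qed
    finally show "norm ((G (Suc k) - G k) $ i) \<le> L1 * norm (x (Suc k) - x k) + (lamk k - lamk (Suc k)) * norm (gf i (x k $ i))"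
      by simp
  qed
  also have "\<dots> = L1 * (mr * norm (x (Suc k) - x k)) + (lamk k - lamk (Suc k)) * (\<Sum>i\<in>UNIV. norm (gf i (x k $ i)))"
    unfolding sum.distrib sum_const_le by (simp add: sum_distrib_left)
  finally show ?thesis .
qed


definition alph where "alph k = (1 / mr) * (\<Sum>i\<in>UNIV. u $ i * \<gamma> k i * v $ i)"

lemma alph_bounds: "\<theta> * \<gamma>hk k \<le> alph k" "alph k \<le> mr * \<gamma>hk k"
proof -
  show "\<theta> * \<gamma>hk k \<le> alph k" using alpha unfolding alph_def by blast
  have "(\<Sum>i\<in>UNIV. u $ i * \<gamma> k i * v $ i) \<le> (\<Sum>i\<in>UNIV. u $ i * \<gamma>hk k * mr)"
  proof (rule sum_mono)
    fix i
    have m1: "u $ i * \<gamma> k i \<le> u $ i * \<gamma>hk k" using u_nonneg gam_le by (intro mult_left_mono) auto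
    have m3: "0 \<le> u $ i * \<gamma>hk k" using u_nonneg gam_le[of k i] gam_nonneg by (meson mult_nonneg_nonneg order_trans)
    show "u $ i * \<gamma> k i * v $ i \<le> u $ i * \<gamma>hk k * mr"
      by (rule mult_mono[OF m1 v_le m3]) (use v_nonneg in auto)
  qed
  also have "\<dots> = mr * (\<gamma>hk k * mr)" using u_sum by (simp add: sum_distrib_right[symmetric] mult.assoc)
  finally show "alph k \<le> mr * \<gamma>hk k" unfolding alph_def using mr_pos by (simp add: field_simps)
qed

lemma xbar_step2: "xbar (Suc k) = xbar k - (alph k / mr) *\<^sub>R T k (xbar k)
    - (alph k / mr) *\<^sub>R (\<Sum>i\<in>UNIV. Ti k i (x k $ i) - Ti k i (xbar k))
    - (1 / mr) *\<^sub>R (\<Sum>j\<in>UNIV. (u $ j * \<gamma> k j) *\<^sub>R Y k $ j)"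
proof -
  have "xbar (Suc k) = (1 / mr) *\<^sub>R (\<Sum>j\<in>UNIV. u $ j *\<^sub>R x k $ j) - (1 / mr) *\<^sub>R (\<Sum>j\<in>UNIV. (u $ j * \<gamma> k j) *\<^sub>R y k $ j)"
    unfolding xbar_step by (simp add: algebra_simps sum_subtractf scaleR_sum_right)
  also have "(1 / mr) *\<^sub>R (\<Sum>j\<in>UNIV. u $ j *\<^sub>R x k $ j) = xbar k" unfolding xbar_def by simp
  also have "(\<Sum>j\<in>UNIV. (u $ j * \<gamma> k j) *\<^sub>R y k $ j) = (\<Sum>j\<in>UNIV. (u $ j * \<gamma> k j) *\<^sub>R Y k $ j) + (mr * alph k) *\<^sub>R ybar k"
  proof -
    have "(\<Sum>j\<in>UNIV. (u $ j * \<gamma> k j) *\<^sub>R y k $ j) = (\<Sum>j\<in>UNIV. (u $ j * \<gamma> k j) *\<^sub>R Y k $ j + (u $ j * \<gamma> k j * v $ j) *\<^sub>R ybar k)"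
      unfolding Y_def by (simp add: algebra_simps)
    also have "\<dots> = (\<Sum>j\<in>UNIV. (u $ j * \<gamma> k j) *\<^sub>R Y k $ j) + (\<Sum>j\<in>UNIV. u $ j * \<gamma> k j * v $ j) *\<^sub>R ybar k"
      by (simp add: sum.distrib scaleR_sum_left)
    also have "(\<Sum>j\<in>UNIV. u $ j * \<gamma> k j * v $ j) = mr * alph k" unfolding alph_def using mr_pos by simp
    finally show ?thesis .
  qed
  also have "ybar k = (1 / mr) *\<^sub>R (T k (xbar k) + (\<Sum>i\<in>UNIV. Ti k i (x k $ i) - Ti k i (xbar k)))"
    unfolding ybar_G G_Ti by (simp add: sum_subtractf sum_Ti)
  finally show ?thesis using mr_pos by (simp add: algebra_simps)
qed

lemma e_rec:
  assumes h1: "\<gamma>hk k * Lm\<^sup>2 \<le> lamk k * \<mu>f" and h2: "\<gamma>hk k * lamk k * \<mu>f \<le> 1"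
  shows "e (Suc k) \<le> (1 - (\<theta> * \<mu>f / (2 * mr)) * \<gamma>hk k * lamk k) * e k + \<gamma>hk k * (mr * L1 * p k + mr * q k) + Gb / \<mu>f / (real k + \<Gamma>)"
proof -
  define \<eta> where "\<eta> = alph k / mr"
  have g0: "0 < \<gamma>hk k" unfolding \<gamma>hk_g using sq.g_pos by simp
  have eta12: "\<theta> * \<gamma>hk k / mr \<le> \<eta>" "\<eta> \<le> \<gamma>hk k"
    unfolding \<eta>_def using alph_bounds[of k] mr_pos theta_pos g0
    by (auto simp: divide_right_mono field_simps)
  have "0 \<le> \<theta> * \<gamma>hk k / mr" using theta_pos g0 mr_pos by simp
  then have eta: "\<theta> * \<gamma>hk k / mr \<le> \<eta>" "\<eta> \<le> \<gamma>hk k" "0 \<le> \<eta>" using eta12 by auto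
  define t where "t = \<eta> * lamk k * \<mu>f"
  have t: "0 \<le> t" "t \<le> 1"
  proof -
    show "0 \<le> t" unfolding t_def using eta lamk_pos[of k] mu_pos by simp
    have "\<eta> * lamk k * \<mu>f \<le> \<gamma>hk k * lamk k * \<mu>f" using eta lamk_pos[of k] mu_pos by (intro mult_right_mono) auto
    then show "t \<le> 1" unfolding t_def using h2 by linarith
  qed
  define w1 where "w1 = xbar k - \<eta> *\<^sub>R T k (xbar k) - z k"
  have c1: "norm w1 \<le> (1 - t / 2) * e k"
  proof -
    have "(norm ((xbar k - \<eta> *\<^sub>R T k (xbar k)) - (z k - \<eta> *\<^sub>R T k (z k))))\<^sup>2
        \<le> (1 - 2 * \<eta> * (lamk k * \<mu>f) + \<eta>\<^sup>2 * Lm\<^sup>2) * (norm (xbar k - z k))\<^sup>2"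
      by (rule contraction_sq[OF _ T_lip eta(3)]) (use T_sm[of k "xbar k" "z k"] in \<open>simp add: mult.assoc\<close>)
    moreover have "(z k - \<eta> *\<^sub>R T k (z k)) = z k" using Tz by simp
    moreover have "\<eta>\<^sup>2 * Lm\<^sup>2 \<le> \<eta> * (lamk k * \<mu>f)"
    proof -
      have "\<eta> * (\<eta> * Lm\<^sup>2) \<le> \<eta> * (\<gamma>hk k * Lm\<^sup>2)" using eta by (intro mult_left_mono mult_right_mono) auto
      also have "\<dots> \<le> \<eta> * (lamk k * \<mu>f)" using h1 eta by (intro mult_left_mono) auto
      finally show ?thesis by (simp add: power2_eq_square mult.assoc)
    qed
    ultimately have A: "(norm w1)\<^sup>2 \<le> (1 - 2 * \<eta> * (lamk k * \<mu>f) + \<eta>\<^sup>2 * Lm\<^sup>2) * (e k)\<^sup>2"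
      and B: "\<eta>\<^sup>2 * Lm\<^sup>2 \<le> \<eta> * (lamk k * \<mu>f)"
      unfolding w1_def e_def by auto
    have "1 - 2 * \<eta> * (lamk k * \<mu>f) + \<eta>\<^sup>2 * Lm\<^sup>2 \<le> 1 - t" unfolding t_def using B by (simp add: mult.assoc mult.commute)
    then have "(1 - 2 * \<eta> * (lamk k * \<mu>f) + \<eta>\<^sup>2 * Lm\<^sup>2) * (e k)\<^sup>2 \<le> (1 - t) * (e k)\<^sup>2"
      by (rule mult_right_mono) simp
    with A have "(norm w1)\<^sup>2 \<le> (1 - t) * (e k)\<^sup>2" by linarith
    also have "\<dots> \<le> ((1 - t / 2) * e k)\<^sup>2"
    proof -
      have "(1 - t/2)\<^sup>2 = 1 - t + (t/2)\<^sup>2" by (simp add: power2_diff)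
      then have "1 - t \<le> (1 - t/2)\<^sup>2" using zero_le_power2[of "t/2"] by linarith
      then show ?thesis unfolding power_mult_distrib by (intro mult_right_mono) auto
    qed
    finally have "(norm w1)\<^sup>2 \<le> ((1 - t / 2) * e k)\<^sup>2" .
    moreover have "0 \<le> (1 - t / 2) * e k" using t e_nonneg[of k] by simp
    ultimately show ?thesis by (rule power2_le_imp_le)
  qed
  have c2: "(1 - t / 2) * e k \<le> (1 - (\<theta> * \<mu>f / (2 * mr)) * \<gamma>hk k * lamk k) * e k"
  proof (rule mult_right_mono[OF _ e_nonneg])
    have "(\<theta> * \<gamma>hk k / mr) * (lamk k * \<mu>f) \<le> \<eta> * (lamk k * \<mu>f)"
      using eta lamk_pos[of k] mu_pos by (intro mult_right_mono) auto
    then show "1 - t / 2 \<le> 1 - (\<theta> * \<mu>f / (2 * mr)) * \<gamma>hk k * lamk k"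
      unfolding t_def by (simp add: field_simps)
  qed
  have c3: "norm (\<eta> *\<^sub>R (\<Sum>i\<in>UNIV. Ti k i (x k $ i) - Ti k i (xbar k))) \<le> \<gamma>hk k * (mr * L1 * p k)"
  proof -
    have "norm (\<eta> *\<^sub>R (\<Sum>i\<in>UNIV. Ti k i (x k $ i) - Ti k i (xbar k))) = \<eta> * norm (\<Sum>i\<in>UNIV. Ti k i (x k $ i) - Ti k i (xbar k))"
      using eta by simp
    also have "\<dots> \<le> \<gamma>hk k * (mr * L1 * p k)"
      using eta Xi_bound[of k] by (intro mult_mono) (auto simp: mr_pos L1_pos p_nonneg less_imp_le)
    finally show ?thesis .
  qed
  have c4: "norm ((1 / mr) *\<^sub>R (\<Sum>j\<in>UNIV. (u $ j * \<gamma> k j) *\<^sub>R Y k $ j)) \<le> \<gamma>hk k * (mr * q k)"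
  proof -
    have "norm (\<Sum>j\<in>UNIV. (u $ j * \<gamma> k j) *\<^sub>R Y k $ j) \<le> (\<Sum>j\<in>UNIV. norm ((u $ j * \<gamma> k j) *\<^sub>R Y k $ j))"
      by (rule norm_sum)
    also have "\<dots> \<le> (\<Sum>j\<in>(UNIV::'m set). mr * \<gamma>hk k * q k)"
    proof (rule sum_mono)
      fix j
      have "norm ((u $ j * \<gamma> k j) *\<^sub>R Y k $ j) = (u $ j * \<gamma> k j) * norm (Y k $ j)"
        using u_nonneg gam_nonneg by simp
      also have "\<dots> \<le> (mr * \<gamma>hk k) * q k"
      proof (rule mult_mono)
        show "u $ j * \<gamma> k j \<le> mr * \<gamma>hk k" using u_le gam_le u_nonneg gam_nonneg mr_pos by (intro mult_mono) (auto simp: less_imp_le)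
        show "norm (Y k $ j) \<le> q k" using Finite_Cartesian_Product.norm_nth_le[of "Y k" j] normY_q[of k] by simp
      qed (use mr_pos g0 in auto)
      finally show "norm ((u $ j * \<gamma> k j) *\<^sub>R Y k $ j) \<le> mr * \<gamma>hk k * q k" .
    qed
    also have "\<dots> = mr * (mr * \<gamma>hk k * q k)" unfolding sum_const_le ..
    finally have "norm (\<Sum>j\<in>UNIV. (u $ j * \<gamma> k j) *\<^sub>R Y k $ j) \<le> mr * (mr * \<gamma>hk k * q k)" .
    then show ?thesis using mr_pos by (simp add: field_simps)
  qed
  have c5: "norm (z k - z (Suc k)) \<le> Gb / \<mu>f / (real k + \<Gamma>)"
    using z_diff[of k] by (simp add: norm_minus_commute)
  have xe: "xbar (Suc k) - z (Suc k) = w1 - \<eta> *\<^sub>R (\<Sum>i\<in>UNIV. Ti k i (x k $ i) - Ti k i (xbar k))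
      - (1 / mr) *\<^sub>R (\<Sum>j\<in>UNIV. (u $ j * \<gamma> k j) *\<^sub>R Y k $ j) + (z k - z (Suc k))"
    unfolding w1_def \<eta>_def xbar_step2 by (simp add: algebra_simps)
  have "e (Suc k) \<le> norm w1 + norm (\<eta> *\<^sub>R (\<Sum>i\<in>UNIV. Ti k i (x k $ i) - Ti k i (xbar k)))
      + norm ((1 / mr) *\<^sub>R (\<Sum>j\<in>UNIV. (u $ j * \<gamma> k j) *\<^sub>R Y k $ j)) + norm (z k - z (Suc k))"
    unfolding e_def xe by (rule tri4)
  moreover have "\<gamma>hk k * (mr * L1 * p k + mr * q k) = \<gamma>hk k * (mr * L1 * p k) + \<gamma>hk k * (mr * q k)"
    by (simp add: distrib_left)
  ultimately show ?thesis using c1 c2 c3 c4 c5 by linarith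
qed

end

context algo begin

definition nv where "nv = norm v"
definition Aconst where "Aconst = 1 + mr * L1 + mr + KR + KR * nv * L1 + c0' * L1 * mr * opRI + c0' * L1 * mr * opR * KR
   + c0' * L1 * mr * opR * KR * nv * L1 + c0' * (g1 + mr * Lf * Bz) + c0' * mr * Lf"

lemma g1_nonneg: "0 \<le> g1" unfolding g1_def by (simp add: sum_nonneg)

lemma A_ge: "mr * L1 \<le> Aconst" "mr \<le> Aconst" "KR \<le> Aconst" "KR * nv * L1 \<le> Aconst"
  "c0' * L1 * mr * opRI \<le> Aconst" "c0' * L1 * mr * opR * KR \<le> Aconst" "c0' * L1 * mr * opR * KR * nv * L1 \<le> Aconst"
  "c0' * (g1 + mr * Lf * Bz) \<le> Aconst" "c0' * mr * Lf \<le> Aconst" "0 < Aconst"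
proof -
  have nn: "0 \<le> mr * L1" "0 \<le> mr" "0 \<le> KR" "0 \<le> KR * nv * L1" "0 \<le> c0' * L1 * mr * opRI"
    "0 \<le> c0' * L1 * mr * opR * KR" "0 \<le> c0' * L1 * mr * opR * KR * nv * L1"
    "0 \<le> c0' * (g1 + mr * Lf * Bz)" "0 \<le> c0' * mr * Lf"
    using mr_pos L1_pos KR_pos c0'_nonneg opRI_nonneg opR_nonneg g1_nonneg Lf_pos Bz_nonneg
    unfolding nv_def by (auto intro!: mult_nonneg_nonneg add_nonneg_nonneg simp: less_imp_le)
  show "mr * L1 \<le> Aconst" "mr \<le> Aconst" "KR \<le> Aconst" "KR * nv * L1 \<le> Aconst"
    "c0' * L1 * mr * opRI \<le> Aconst" "c0' * L1 * mr * opR * KR \<le> Aconst" "c0' * L1 * mr * opR * KR * nv * L1 \<le> Aconst"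
    "c0' * (g1 + mr * Lf * Bz) \<le> Aconst" "c0' * mr * Lf \<le> Aconst" "0 < Aconst"
    unfolding Aconst_def using nn by linarith+
qed

lemma y_bound': "norm (y k) \<le> q k + nv * L1 * (e k + p k)" unfolding nv_def by (rule y_bound)

lemma rec2: "p (Suc k) \<le> \<sigma>R * p k + Aconst * \<gamma>hk k * (q k + e k + p k)"
proof -
  have g0: "0 \<le> \<gamma>hk k" unfolding \<gamma>hk_g using sq.g_pos less_imp_le by blast
  have "KR * \<gamma>hk k * norm (y k) \<le> KR * \<gamma>hk k * (q k + nv * L1 * (e k + p k))"
    using y_bound' KR_pos g0 by (intro mult_left_mono) auto
  also have "\<dots> = \<gamma>hk k * (KR * q k + (KR * nv * L1) * (e k + p k))" by (simp add: algebra_simps)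
  also have "\<dots> \<le> \<gamma>hk k * (Aconst * q k + Aconst * (e k + p k))"
    using A_ge q_nonneg e_nonneg p_nonneg g0
    by (intro mult_left_mono add_mono mult_right_mono) (auto simp: add_nonneg_nonneg)
  also have "\<dots> = Aconst * \<gamma>hk k * (q k + e k + p k)" by (simp add: algebra_simps)
  finally show ?thesis using p_rec[of k] by linarith
qed

lemma rec3: "q (Suc k) \<le> \<sigma>C * q k + Aconst * (p k + \<gamma>hk k * (q k + e k + p k)) + Aconst * (lamk k - lamk (Suc k)) * (1 + e k + p k)"
proof -
  have g0: "0 \<le> \<gamma>hk k" unfolding \<gamma>hk_g using sq.g_pos less_imp_le by blast
  have dl: "0 \<le> lamk k - lamk (Suc k)" using sq.dl_le(3) lamk_l by simp
  define dl where "dl = lamk k - lamk (Suc k)"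
  have "norm (G (Suc k) - G k) \<le> L1 * (mr * (opRI * p k + opR * KR * \<gamma>hk k * norm (y k))) + dl * (g1 + mr * Lf * (p k + e k + Bz))"
    using G_diff_bound[of k] xdiff_bound[of k] gf_sum_bound[of k] L1_pos mr_pos dl unfolding dl_def
    by (smt (verit, ccfv_SIG) mult_left_mono)
  then have "c0' * norm (G (Suc k) - G k) \<le> c0' * (L1 * (mr * (opRI * p k + opR * KR * \<gamma>hk k * norm (y k))) + dl * (g1 + mr * Lf * (p k + e k + Bz)))"
    using c0'_nonneg by (rule mult_left_mono)
  also have "\<dots> = (c0' * L1 * mr * opRI) * p k + (c0' * L1 * mr * opR * KR) * (\<gamma>hk k * norm (y k))
      + dl * (c0' * (g1 + mr * Lf * Bz) + (c0' * mr * Lf) * (p k + e k))"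
    by (simp add: algebra_simps)
  also have "\<dots> \<le> Aconst * p k + Aconst * (\<gamma>hk k * (q k + e k + p k)) + dl * (Aconst + Aconst * (p k + e k))"
  proof (intro add_mono mult_left_mono mult_right_mono)
    show "c0' * L1 * mr * opRI \<le> Aconst" by (rule A_ge)
    show "0 \<le> p k" by (rule p_nonneg)
    have "(c0' * L1 * mr * opR * KR) * (\<gamma>hk k * norm (y k)) \<le> (c0' * L1 * mr * opR * KR) * (\<gamma>hk k * (q k + nv * L1 * (e k + p k)))"
      using y_bound' g0 c0'_nonneg L1_pos mr_pos opR_nonneg KR_pos
      by (intro mult_left_mono) (auto intro!: mult_nonneg_nonneg simp: less_imp_le)
    also have "\<dots> = \<gamma>hk k * ((c0' * L1 * mr * opR * KR) * q k + (c0' * L1 * mr * opR * KR * nv * L1) * (e k + p k))"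
      by (simp add: algebra_simps)
    also have "\<dots> \<le> \<gamma>hk k * (Aconst * q k + Aconst * (e k + p k))"
      using A_ge q_nonneg e_nonneg p_nonneg g0
      by (intro mult_left_mono add_mono mult_right_mono) (auto simp: add_nonneg_nonneg)
    also have "\<dots> = Aconst * (\<gamma>hk k * (q k + e k + p k))" by (simp add: algebra_simps)
    finally show "(c0' * L1 * mr * opR * KR) * (\<gamma>hk k * norm (y k)) \<le> Aconst * (\<gamma>hk k * (q k + e k + p k))" .
    show "c0' * (g1 + mr * Lf * Bz) \<le> Aconst" by (rule A_ge)
    show "c0' * mr * Lf \<le> Aconst" by (rule A_ge)
    show "0 \<le> p k + e k" using p_nonneg e_nonneg by (simp add: add_nonneg_nonneg)
    show "0 \<le> dl" unfolding dl_def by (rule dl)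
  qed
  also have "\<dots> = Aconst * (p k + \<gamma>hk k * (q k + e k + p k)) + Aconst * dl * (1 + e k + p k)"
    by (simp add: algebra_simps)
  finally show ?thesis using q_rec[of k] unfolding dl_def by linarith
qed

lemma rec1:
  assumes h1: "\<gamma>hk k * Lm\<^sup>2 \<le> lamk k * \<mu>f" and h2: "\<gamma>hk k * lamk k * \<mu>f \<le> 1"
  shows "e (Suc k) \<le> (1 - (\<theta> * \<mu>f / (2 * mr)) * \<gamma>hk k * lamk k) * e k + Aconst * \<gamma>hk k * (p k + q k) + Gb / \<mu>f / (real k + \<Gamma>)"
proof -
  have g0: "0 \<le> \<gamma>hk k" unfolding \<gamma>hk_g using sq.g_pos less_imp_le by blast
  have "\<gamma>hk k * (mr * L1 * p k + mr * q k) \<le> \<gamma>hk k * (Aconst * p k + Aconst * q k)"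
    using A_ge p_nonneg q_nonneg g0 by (intro mult_left_mono add_mono mult_right_mono) auto
  also have "\<dots> = Aconst * \<gamma>hk k * (p k + q k)" by (simp add: algebra_simps)
  finally show ?thesis using e_rec[OF h1 h2] by linarith
qed

lemma rates: "\<exists>K. \<forall>k. e k \<le> K * sq.s k \<and> p k \<le> K * sq.s k \<and> q k \<le> K * sq.s k"
proof (rule sq.lyap[where A = Aconst and c = "\<theta> * \<mu>f / (2 * mr)" and \<sigma>R = \<sigma>R and \<sigma>C = \<sigma>C
      and dl = "\<lambda>k. lamk k - lamk (Suc k)" and d = "\<lambda>k. Gb / \<mu>f / (real k + \<Gamma>)" and D = "Gb / \<mu>f"])
  show "\<forall>k. 0 \<le> e k \<and> 0 \<le> p k \<and> 0 \<le> q k" using e_nonneg p_nonneg q_nonneg by auto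
  show "0 < Aconst" by (rule A_ge)
  show "0 < \<theta> * \<mu>f / (2 * mr)" using theta_pos mu_pos mr_pos by simp
  show "0 \<le> \<sigma>R" "\<sigma>R < 1" "0 \<le> \<sigma>C" "\<sigma>C < 1" using \<sigma>R_nonneg sigR \<sigma>C_nonneg sigC by auto
  show "\<forall>k. 0 \<le> lamk k - lamk (Suc k) \<and> lamk k - lamk (Suc k) \<le> sq.l k / (real k + \<Gamma>)"
    using sq.dl_le lamk_l by auto
  show "\<forall>k. Gb / \<mu>f / (real k + \<Gamma>) \<le> Gb / \<mu>f / (real k + \<Gamma>)" by simp
  have ev1: "eventually (\<lambda>k. sq.g k \<le> (\<mu>f / Lm\<^sup>2) * sq.l k) sequentially"
    by (rule sq.ev_g_le_l) (use mu_pos Lm_pos in simp)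
  have ev2: "eventually (\<lambda>k. sq.g k \<le> 1 / (lam * \<mu>f)) sequentially"
    by (rule sq.ev_g_le) (use mu_pos par in simp)
  show "eventually (\<lambda>k. e (Suc k) \<le> (1 - \<theta> * \<mu>f / (2 * mr) * sq.g k * sq.l k) * e k + Aconst * sq.g k * (p k + q k) + Gb / \<mu>f / (real k + \<Gamma>)
       \<and> p (Suc k) \<le> \<sigma>R * p k + Aconst * sq.g k * (q k + e k + p k)
       \<and> q (Suc k) \<le> \<sigma>C * q k + Aconst * (p k + sq.g k * (q k + e k + p k)) + Aconst * (lamk k - lamk (Suc k)) * (1 + e k + p k)) sequentially"
    using ev1 ev2
  proof (eventually_elim)
    case (elim k)
    have h1: "\<gamma>hk k * Lm\<^sup>2 \<le> lamk k * \<mu>f"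
    proof -
      have "sq.g k * Lm\<^sup>2 \<le> ((\<mu>f / Lm\<^sup>2) * sq.l k) * Lm\<^sup>2" using elim(1) by (rule mult_right_mono) simp
      also have "\<dots> = sq.l k * \<mu>f" using Lm_pos by simp
      finally show ?thesis unfolding \<gamma>hk_g lamk_l .
    qed
    have h2: "\<gamma>hk k * lamk k * \<mu>f \<le> 1"
    proof -
      have "sq.g k * sq.l k * \<mu>f \<le> sq.g k * lam * \<mu>f"
        using sq.l_le sq.g_pos mu_pos by (intro mult_right_mono mult_left_mono) (auto simp: less_imp_le)
      also have "\<dots> \<le> (1 / (lam * \<mu>f)) * lam * \<mu>f"
        using elim(2) par mu_pos by (intro mult_right_mono) auto
      also have "\<dots> = 1" using par mu_pos by simp
      finally show ?thesis unfolding \<gamma>hk_g lamk_l .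
    qed
    show ?case using rec1[OF h1 h2] rec2[of k] rec3[of k] unfolding \<gamma>hk_g lamk_l by auto
  qed
qed

end

context algo begin

lemma final_algo: "\<exists>K. \<forall>Bv. K \<le> Bv \<longrightarrow>
      ((\<forall>k\<ge>1. ext_norm NR (x (k + 1) - (\<chi> i. xbar (k + 1))) \<le> Bv / (real k + \<Gamma> - 1) powr (1 - a - b))
      \<and> (\<forall>k\<ge>1. ext_norm NC (y (k + 1) - (\<chi> i. v $ i *\<^sub>R ybar (k + 1))) \<le> Bv / (real k + \<Gamma> - 1) powr (1 - a - b))
      \<and> xbar \<longlonglongrightarrow> xs)"
proof -
  obtain K where K: "\<forall>k. e k \<le> K * sq.s k \<and> p k \<le> K * sq.s k \<and> q k \<le> K * sq.s k" using rates by blast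
  have sbound: "sq.s (k + 1) \<le> 1 / (real k + \<Gamma> - 1) powr (1 - a - b)" if k: "k \<ge> 1" for k
  proof -
    have pos: "0 < real k + \<Gamma> - 1" using k par by simp
    have "(real k + \<Gamma> - 1) powr (1 - a - b) \<le> (real (k + 1) + \<Gamma>) powr (1 - a - b)"
      by (rule powr_mono2) (use par pos in auto)
    moreover have p1: "0 < (real k + \<Gamma> - 1) powr (1 - a - b)" using pos by simp
    moreover have p2: "0 < (real (k + 1) + \<Gamma>) powr (1 - a - b)" using par by simp
    ultimately show ?thesis unfolding sq.s_def
      by (intro divide_left_mono) (use p1 p2 mult_pos_pos in auto)
  qed
  have xl: "xbar \<longlonglongrightarrow> xs"
  proof -
    have "(\<lambda>k. K * sq.s k) \<longlonglongrightarrow> K * 0" by (intro tendsto_mult tendsto_const sq.s_lim)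
    then have "(\<lambda>k. xbar k - z k) \<longlonglongrightarrow> 0"
      by (intro Lim_null_comparison[of "\<lambda>k. xbar k - z k" "\<lambda>k. K * sq.s k"]) (use K in \<open>auto simp: e_def\<close>)
    then have "(\<lambda>k. (xbar k - z k) + z k) \<longlonglongrightarrow> 0 + xs" by (intro tendsto_add z_lim)
    then show ?thesis by simp
  qed
  have "\<forall>Bv. max K 0 \<le> Bv \<longrightarrow>
      ((\<forall>k\<ge>1. ext_norm NR (x (k + 1) - (\<chi> i. xbar (k + 1))) \<le> Bv / (real k + \<Gamma> - 1) powr (1 - a - b))
      \<and> (\<forall>k\<ge>1. ext_norm NC (y (k + 1) - (\<chi> i. v $ i *\<^sub>R ybar (k + 1))) \<le> Bv / (real k + \<Gamma> - 1) powr (1 - a - b))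
      \<and> xbar \<longlonglongrightarrow> xs)"
  proof (intro allI impI)
    fix Bv assume B: "max K 0 \<le> Bv"
    have main: "W \<le> Bv / (real k + \<Gamma> - 1) powr (1 - a - b)" if "W \<le> K * sq.s (k + 1)" "k \<ge> 1" for W k
    proof -
      have "K * sq.s (k + 1) \<le> Bv * sq.s (k + 1)" using B sq.s_pos[of "k+1"] by (intro mult_right_mono) auto
      also have "\<dots> \<le> Bv * (1 / (real k + \<Gamma> - 1) powr (1 - a - b))" using B sbound[OF that(2)] by (intro mult_left_mono) auto
      finally show ?thesis using that(1) by simp
    qed
    have 1: "\<forall>k\<ge>1. ext_norm NR (x (k + 1) - (\<chi> i. xbar (k + 1))) \<le> Bv / (real k + \<Gamma> - 1) powr (1 - a - b)"
      using K main unfolding p_def X_def by blast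
    have 2: "\<forall>k\<ge>1. ext_norm NC (y (k + 1) - (\<chi> i. v $ i *\<^sub>R ybar (k + 1))) \<le> Bv / (real k + \<Gamma> - 1) powr (1 - a - b)"
      using K main unfolding q_def Y_def by blast
    show "(\<forall>k\<ge>1. ext_norm NR (x (k + 1) - (\<chi> i. xbar (k + 1))) \<le> Bv / (real k + \<Gamma> - 1) powr (1 - a - b))
      \<and> (\<forall>k\<ge>1. ext_norm NC (y (k + 1) - (\<chi> i. v $ i *\<^sub>R ybar (k + 1))) \<le> Bv / (real k + \<Gamma> - 1) powr (1 - a - b))
      \<and> xbar \<longlonglongrightarrow> xs" using 1 2 xl by blast
  qed
  then show ?thesis by blast
qed

end

lemma B_lower:
  fixes M \<mu>f lam \<gamma>h \<theta> X Y :: real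
  assumes "0 < M" "0 < \<mu>f" "0 < lam" "0 < \<gamma>h" "0 < \<theta>"
  shows "4 * M / (\<mu>f\<^sup>2 * lam * \<gamma>h * \<theta>) \<le> max X (4 * (max 1 Y * (sqrt 3 * M / \<mu>f)) / (\<mu>f * lam * \<gamma>h * \<theta>))"
proof -
  have "M / \<mu>f \<le> 1 * (sqrt 3 * M / \<mu>f)"
  proof -
    have "1 \<le> sqrt 3" by simp
    then have "1 * (M / \<mu>f) \<le> sqrt 3 * (M / \<mu>f)" using assms by (intro mult_right_mono) auto
    then show ?thesis by simp
  qed
  also have "\<dots> \<le> max 1 Y * (sqrt 3 * M / \<mu>f)" using assms by (intro mult_right_mono) auto
  finally have "4 * (M / \<mu>f) / (\<mu>f * lam * \<gamma>h * \<theta>) \<le> 4 * (max 1 Y * (sqrt 3 * M / \<mu>f)) / (\<mu>f * lam * \<gamma>h * \<theta>)"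
    using assms by (intro divide_right_mono) auto
  moreover have "4 * (M / \<mu>f) / (\<mu>f * lam * \<gamma>h * \<theta>) = 4 * M / (\<mu>f\<^sup>2 * lam * \<gamma>h * \<theta>)"
    by (simp add: power2_eq_square mult.assoc)
  ultimately show ?thesis by linarith
qed

theorem theorem1:
  fixes f :: "'m::finite \<Rightarrow> real^'n::finite \<Rightarrow> real"
    and gf :: "'m \<Rightarrow> real^'n \<Rightarrow> real^'n"
    and Fi :: "'m \<Rightarrow> real^'n \<Rightarrow> real^'n"
    and \<mu>f Lf LF :: real
    and xs :: "real^'n"
    and R C :: "real^'m^'m"
    and u v :: "real^'m"
    and NR NC :: "real^'m \<Rightarrow> real"
    and \<delta>RC \<delta>C2 :: real
    and \<gamma> :: "nat \<Rightarrow> 'm \<Rightarrow> real"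
    and \<gamma>h lam \<Gamma> a b \<tau> \<theta> :: real
    and x y :: "nat \<Rightarrow> real^'n^'m"
    and mr \<sigma>R \<sigma>C c0 L0 \<Lambda>0 \<theta>bar \<Gamma>2 c1 c2 c3 c4 \<Gamma>3 :: real
    and Fs gs :: "real^'n \<Rightarrow> real^'n"
    and lamk \<gamma>hk :: "nat \<Rightarrow> real"
    and xbar ybar :: "nat \<Rightarrow> real^'n"
  assumes "mr = real CARD('m)"
    and "Fs = (\<lambda>z. \<Sum>i\<in>UNIV. Fi i z)"
    and "gs = (\<lambda>z. \<Sum>i\<in>UNIV. gf i z)"
    and "lamk = (\<lambda>k::nat. lam / (real k + \<Gamma>) powr b)"
    and "\<gamma>hk = (\<lambda>k::nat. \<gamma>h / (real k + \<Gamma>) powr a)"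
    and "xbar = (\<lambda>k. (1 / mr) *\<^sub>R (\<Sum>i\<in>UNIV. u $ i *\<^sub>R x k $ i))"
    and "ybar = (\<lambda>k. (1 / mr) *\<^sub>R (\<Sum>i\<in>UNIV. y k $ i))"
  (* smoothness, convexity, monotonicity, Lipschitz continuity *)
  assumes diff: "\<forall>i z. (f i has_derivative (\<lambda>h. gf i z \<bullet> h)) (at z)"
    and contgrad: "\<forall>i. continuous_on UNIV (gf i)"
    and mu_pos: "\<mu>f > 0"
    and sconv: "strongly_convex \<mu>f (\<lambda>z. \<Sum>i\<in>UNIV. f i z)"
    and Lf_pos: "Lf > 0" and lip_f: "\<forall>i. lipschitz_on Lf UNIV (gf i)"
    and mono: "monotone_op Fs"
    and LF_pos: "LF > 0" and lip_F: "\<forall>i. lipschitz_on LF UNIV (Fi i)"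
    and sol_ne: "SOL Fs \<noteq> {}"
    and xs_sol: "xs \<in> SOL Fs"
    and xs_min: "\<forall>z\<in>SOL Fs. (\<Sum>i\<in>UNIV. f i xs) \<le> (\<Sum>i\<in>UNIV. f i z)"
  (* communication matrices *)
    and R_nonneg: "\<forall>i j. R $ i $ j \<ge> 0" and R_diag: "\<forall>i. R $ i $ i > 0"
    and R_row: "R *v (\<chi> i. 1) = (\<chi> i. 1)"
    and C_nonneg: "\<forall>i j. C $ i $ j \<ge> 0" and C_diag: "\<forall>i. C $ i $ i > 0"
    and C_col: "(\<chi> i. 1) v* C = (\<chi> i. 1)"
    and roots: "tree_roots R \<inter> tree_roots (transpose C) \<noteq> {}"
    and u_nonneg: "\<forall>i. u $ i \<ge> 0" and u_left: "u v* R = u" and u_sum: "(\<Sum>i\<in>UNIV. u $ i) = mr"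
    and v_nonneg: "\<forall>i. v $ i \<ge> 0" and v_right: "C *v v = v" and v_sum: "(\<Sum>i\<in>UNIV. v $ i) = mr"
  (* algorithm *)
    and y0: "\<forall>i. y 0 $ i = Fi i (x 0 $ i) + lamk 0 *\<^sub>R gf i (x 0 $ i)"
    and x_step: "\<forall>k i. x (Suc k) $ i = (\<Sum>j\<in>UNIV. R $ i $ j *\<^sub>R (x k $ j - \<gamma> k j *\<^sub>R y k $ j))"
    and y_step: "\<forall>k i. y (Suc k) $ i = (\<Sum>j\<in>UNIV. C $ i $ j *\<^sub>R y k $ j)
                   + Fi i (x (Suc k) $ i) + lamk (Suc k) *\<^sub>R gf i (x (Suc k) $ i)
                   - Fi i (x k $ i) - lamk k *\<^sub>R gf i (x k $ i)"
  (* parameters *)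
    and gam_nonneg: "\<forall>k i. \<gamma> k i \<ge> 0"
    and gam_max: "\<forall>k. Max (range (\<gamma> k)) = \<gamma>hk k"
    and par_pos: "\<gamma>h > 0" "lam > 0" "\<Gamma> > 0" "a > 0" "b > 0"
    and ab: "a > b" "a + b < 1" "2 * a + 3 * b < 2"
    and Gam1: "\<Gamma> \<ge> 1"
    and tau_pos: "\<tau> > 0"
    and Gam_tau: "\<Gamma> \<ge> (4 / (\<gamma>h * lam * \<mu>f * \<tau>)) powr (1 / (1 - a - b))"
    and theta_pos: "\<theta> > 0"
    and alpha: "\<forall>k. (1 / mr) * (\<Sum>i\<in>UNIV. u $ i * \<gamma> k i * v $ i) \<ge> \<theta> * \<gamma>hk k"
  (* norms *)
    and NR_norm: "is_vnorm NR" and NC_norm: "is_vnorm NC"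
  assumes "\<sigma>R = op_norm NR (R - (\<chi> i j. u $ j / mr))"
    and "\<sigma>C = op_norm NC (C - (\<chi> i j. v $ i / mr))"
  assumes sigR: "\<sigma>R < 1" and sigC: "\<sigma>C < 1"
    and NR_ge: "\<forall>w. norm w \<le> NR w" and NC_ge: "\<forall>w. norm w \<le> NC w"
    and dRC: "\<delta>RC > 0" "\<forall>w. NR w \<le> \<delta>RC * NC w"
    and dC2: "\<delta>C2 > 0" "\<forall>w. NC w \<le> \<delta>C2 * norm w"
  (* constants *)
  assumes "c0 = \<delta>C2 * op_norm NC (mat 1 - (\<chi> i j. v $ i / mr))"
    and "L0 = LF + lamk 0 * Lf"
    and "\<Lambda>0 = \<bar>1 - lamk 1 / lamk 0\<bar>"
    and "\<theta>bar = (u \<bullet> v) / mr"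
    and "\<Gamma>2 = max ((L0 * \<gamma>h * (u \<bullet> v) / mr) powr (1 / a))
                    ((\<gamma>h * (u \<bullet> v) * L0\<^sup>2 / (mr * \<mu>f * lam)) powr (1 / (a - b)))"
    and "c1 = (0.5 * \<mu>f * \<theta>bar * lam) * \<sigma>R * \<delta>RC * c0 * L0 * spec_norm R * norm v * (L0 / sqrt mr)
             + (\<theta>bar * L0 / sqrt mr) * \<sigma>R * \<delta>RC * c0 * L0 * spec_norm R * norm v * L0
             + (norm u / mr) * \<sigma>R * L0 * NR v * c0 * L0 * spec_norm R * norm v * (L0 / sqrt mr)"
    and "c2 = (0.5 * \<mu>f * \<theta>bar * lam) * \<sigma>R * \<delta>RC * c0 * L0 * (spec_norm (R - mat 1) + 2 * \<Lambda>0)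
             + ((1 - \<sigma>C) / 2) * (\<theta>bar * L0 / sqrt mr) * \<sigma>R * L0 * NR v
             + (\<theta>bar * L0 / sqrt mr) * \<sigma>R * \<delta>RC * c0 * L0 * (2 * sqrt mr * \<Lambda>0)
             + (norm u / mr) * \<sigma>R * L0 * NR v * c0 * L0 * (spec_norm (R - mat 1) + 2 * \<Lambda>0)
             + ((1 - \<sigma>R) / 2) * c0 * L0 * spec_norm R * norm v * L0 * (norm u / mr)"
    and "c3 = (1 / 8) * \<mu>f * \<theta> * (1 - \<sigma>R) * (1 - \<sigma>C)"
    and "c4 = ((1 - \<sigma>R) / 2) * c0 * L0 * sqrt mr * (norm u / mr)"
    and "\<Gamma>3 = Max {\<Gamma>2,
        ((\<mu>f * lam * \<gamma>h * (u \<bullet> v) + 2 * \<gamma>h * NR v * L0) / ((1 - \<sigma>R) * sqrt mr)) powr (1 / a),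
        ((\<mu>f * lam * \<gamma>h * (u \<bullet> v) + 2 * \<gamma>h * c0 * L0 * spec_norm R) / (1 - \<sigma>C)) powr (1 / a),
        (0.5 * \<mu>f * lam * \<gamma>h * (u \<bullet> v) / mr) powr (1 / (a + b)),
        (3 * c1 * \<gamma>h\<^sup>2 / (c3 * lam)) powr (1 / (2 * a - b)),
        (3 * c2 * \<gamma>h / (c3 * lam)) powr (1 / (a - b)),
        (3 * c4 / (c3 * lam)) powr (1 / (1 - b))}"
  (* additional hypotheses of the theorem *)
  assumes tau_def: "\<tau> = \<theta> / 2"
    and Gam3: "\<Gamma> \<ge> \<Gamma>3"
  shows "\<exists>M > 0. \<exists>BF > 0.
    (let \<Theta> = max 1 (max (\<sigma>R * \<gamma>h * L0 * NR v)
                  (c0 * L0 * (\<gamma>h * spec_norm R * norm v * L0 + sqrt mr * \<Lambda>0 + \<mu>f * c0 * BF / M)))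
               * (sqrt 3 * M / \<mu>f);
         \<Delta>1 = sqrt ((norm (xbar 1 - reg_sol Fs gs (lamk 0)))\<^sup>2
                    + (ext_norm NR (x 1 - (\<chi> i. xbar 1)))\<^sup>2
                    + (ext_norm NC (y 1 - (\<chi> i. v $ i *\<^sub>R ybar 1)))\<^sup>2);
         \<B> = max ((\<Gamma> + 1) powr (1 - a - b) * \<Delta>1) (4 * \<Theta> / (\<mu>f * lam * \<gamma>h * \<theta>))
     in (\<forall>k\<ge>1. ext_norm NR (x (k + 1) - (\<chi> i. xbar (k + 1)))
                 \<le> \<B> / (real k + \<Gamma> - 1) powr (1 - a - b))
      \<and> (\<forall>k\<ge>1. ext_norm NC (y (k + 1) - (\<chi> i. v $ i *\<^sub>R ybar (k + 1)))
                 \<le> \<B> / (real k + \<Gamma> - 1) powr (1 - a - b))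
      \<and> xbar \<longlonglongrightarrow> xs)"
proof -
  interpret algo f gf Fi \<mu>f Lf LF xs R C u v NR NC \<delta>RC \<delta>C2 \<gamma> \<gamma>h lam \<Gamma> a b \<theta> x y mr \<sigma>R \<sigma>C Fs gs lamk \<gamma>hk xbar ybar
    by (unfold_locales; (fact assms)?)
  obtain K where K: "\<forall>Bv. K \<le> Bv \<longrightarrow>
      ((\<forall>k\<ge>1. ext_norm NR (x (k + 1) - (\<chi> i. xbar (k + 1))) \<le> Bv / (real k + \<Gamma> - 1) powr (1 - a - b))
      \<and> (\<forall>k\<ge>1. ext_norm NC (y (k + 1) - (\<chi> i. v $ i *\<^sub>R ybar (k + 1))) \<le> Bv / (real k + \<Gamma> - 1) powr (1 - a - b))
      \<and> xbar \<longlonglongrightarrow> xs)" using final_algo by blast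
  define M where "M = (\<bar>K\<bar> + 1) * (\<mu>f\<^sup>2 * lam * \<gamma>h * \<theta>)"
  have pos: "0 < \<mu>f" "0 < lam" "0 < \<gamma>h" "0 < \<theta>" using mu_pos par theta_pos by auto
  have den: "0 < \<mu>f\<^sup>2 * lam * \<gamma>h * \<theta>" using pos by simp
  have M: "0 < M" unfolding M_def using den by (simp add: add_pos_nonneg)
  have MK: "K \<le> 4 * M / (\<mu>f\<^sup>2 * lam * \<gamma>h * \<theta>)"
  proof -
    have eq: "4 * M / (\<mu>f\<^sup>2 * lam * \<gamma>h * \<theta>) = 4 * (\<bar>K\<bar> + 1)" unfolding M_def using pos by simp
    show ?thesis unfolding eq using abs_ge_self[of K] abs_ge_zero[of K] by (smt (verit))
  qed
  show ?thesis
    apply (rule exI[of _ M])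
    apply (rule conjI[OF M])
    apply (rule exI[of _ 1])
    apply (rule conjI, simp)
    apply (unfold Let_def)
    apply (rule K[rule_format])
    apply (rule order_trans[OF MK B_lower[OF M pos]])
    done
qed

end
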